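(* Let $\alpha<_c\beta$ with $\beta/\!\!/\alpha$ an nc border strip with $n$ boxes. Then $$\sum_{\substack{w\in CRHW_n\\ w(\alpha)=\beta}}(-1)^{\mathrm{asc}(w)}=(-1)^{\,n-1-|E(\beta/\!\!/\alpha)|}\,\delta_{0,|NE(\beta/\!\!/\alpha)|},$$ where $\delta$ is the Kronecker delta.
   Context: A composition is a finite sequence $\alpha=(\alpha_1,\dots,\alpha_k)$ of positive integers; $\ell(\alpha)=k$; its diagram is the set of boxes $(i,j)$, $1\le i\le\ell(\alpha)$, $1\le j\le\alpha_i$, rows top to bottom, columns left to right. For compositions $\gamma=(\gamma_1,\dots,\gamma_l)$, $\delta$ write $\gamma\lessdot_c\delta$ if $\delta=(1,\gamma_1,\dots,\gamma_l)$ or $\delta=(\gamma_1,\dots,\gamma_k+1,\dots,\gamma_l)$ with $\gamma_i\ne\gamma_k$ for all $i<k$; $<_c$ is the transitive closure. For $\gamma<_c\delta$, $\delta/\!\!/\gamma$ consists of the boxes of $\delta$ other than $(\ell(\delta)-\ell(\gamma)+i,j)$, $1\le i\le\ell(\gamma)$, $1\le j\le\gamma_i$. $\mathrm{supp}(\beta/\!\!/\alpha)$ is the set of columns containing a box of $\beta/\!\!/\alpha$; interval shape: supp is a set of consecutive integers. nc border strip: an interval shape such that (1) if $(i,1),(i,2)\in\beta/\!\!/\alpha$ then $(i,1)$ is the bottommost box of column 1 of $\beta/\!\!/\alpha$, and (2) if $(i,j),(i,j+1)\in\beta/\!\!/\alpha$ with $j\ge2$ then $(i,j)$ is the topmost box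 of column $j$ of $\beta/\!\!/\alpha$. $E(\beta/\!\!/\alpha)$ is the set of $j$ such that $(i,j),(i,j+1)\in\beta/\!\!/\alpha$ for some $i$. $NE(\beta/\!\!/\alpha)$ is the set of $j\in\mathrm{supp}(\beta/\!\!/\alpha)$ such that column $j+1$ of $\beta/\!\!/\alpha$ contains at least one box and $i_1<i_2$ for all boxes $(i_1,j+1),(i_2,j)\in\beta/\!\!/\alpha$. Box-adding operators: $\mathfrak t_1(\alpha)=(1,\alpha_1,\dots,\alpha_k)$; for $i\ge2$, $\mathfrak t_i(\alpha)$ increases the leftmost part equal to $i-1$ by $1$, and is $0$ if none; $\mathfrak t_i(0)=0$. A word $w=\mathfrak t_{i_1}\cdots\mathfrak t_{i_n}$ (distinct sequences are distinct words) acts by $w(\alpha)=\mathfrak t_{i_1}(\cdots\mathfrak t_{i_n}(\alpha))$; it is a reverse $k$-hookword if $i_1\le\cdots\le i_{k+1}>i_{k+2}>\cdots>i_n$ ($0\le k\le n-1$, uniquely determined), and then $\mathrm{asc}(w)=k$. It is connected if $\{i_1,\dots,i_n\}$ is a set of consecutive integers; $CRHW_n$ is the set of connected reverse hookwords of length $n$. *)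

theory Defs
  imports Main
begin

text \<open>Compositions are lists of positive naturals; rows/columns of diagrams are 1-indexed.\<close>

definition is_composition :: "nat list \<Rightarrow> bool" where
  "is_composition \<alpha> \<longleftrightarrow> (\<forall>x\<in>set \<alpha>. 0 < x)"

definition comp_cover :: "nat list \<Rightarrow> nat list \<Rightarrow> bool" where
  "comp_cover \<gamma> \<delta> \<longleftrightarrow>
     \<delta> = 1 # \<gamma> \<or>
     (\<exists>k < length \<gamma>. \<delta> = \<gamma>[k := \<gamma> ! k + 1] \<and> (\<forall>i < k. \<gamma> ! i \<noteq> \<gamma> ! k))"

definition comp_less :: "nat list \<Rightarrow> nat list \<Rightarrow> bool" where
  "comp_less = tranclp comp_cover"

definition diagram :: "nat list \<Rightarrow> (nat \<times> nat) set" where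
  "diagram \<beta> = {(i, j). 1 \<le> i \<and> i \<le> length \<beta> \<and> 1 \<le> j \<and> j \<le> \<beta> ! (i - 1)}"

text \<open>The skew shape beta // alpha (alpha bottom-justified inside beta).\<close>
definition skew :: "nat list \<Rightarrow> nat list \<Rightarrow> (nat \<times> nat) set" where
  "skew \<beta> \<alpha> = diagram \<beta> -
     {(length \<beta> - length \<alpha> + i, j) | i j.
        1 \<le> i \<and> i \<le> length \<alpha> \<and> 1 \<le> j \<and> j \<le> \<alpha> ! (i - 1)}"

definition supp :: "(nat \<times> nat) set \<Rightarrow> nat set" where
  "supp S = snd ` S"

definition interval_shape :: "(nat \<times> nat) set \<Rightarrow> bool" where
  "interval_shape S \<longleftrightarrow> (\<exists>a b. supp S = {a..b})"

definition nc_border_strip :: "(nat \<times> nat) set \<Rightarrow> bool" where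
  "nc_border_strip S \<longleftrightarrow> interval_shape S \<and>
     (\<forall>i. (i, 1) \<in> S \<and> (i, 2) \<in> S \<longrightarrow> i = Max {i'. (i', 1) \<in> S}) \<and>
     (\<forall>i j. 2 \<le> j \<and> (i, j) \<in> S \<and> (i, j + 1) \<in> S \<longrightarrow> i = Min {i'. (i', j) \<in> S})"

definition E_set :: "(nat \<times> nat) set \<Rightarrow> nat set" where
  "E_set S = {j. \<exists>i. (i, j) \<in> S \<and> (i, j + 1) \<in> S}"

definition NE_set :: "(nat \<times> nat) set \<Rightarrow> nat set" where
  "NE_set S = {j \<in> supp S. (\<exists>i. (i, j + 1) \<in> S) \<and>
                 (\<forall>i1 i2. (i1, j + 1) \<in> S \<and> (i2, j) \<in> S \<longrightarrow> i1 < i2)}"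

text \<open>Box-adding operators; None represents the zero result.\<close>
definition box_op :: "nat \<Rightarrow> nat list \<Rightarrow> nat list option" where
  "box_op i \<alpha> =
     (if i = 1 then Some (1 # \<alpha>)
      else if (\<exists>k < length \<alpha>. \<alpha> ! k = i - 1)
      then (let k = (LEAST k. k < length \<alpha> \<and> \<alpha> ! k = i - 1) in Some (\<alpha>[k := i]))
      else None)"

text \<open>w = t_{i1} ... t_{in} acts by applying t_{in} first.\<close>
definition word_act :: "nat list \<Rightarrow> nat list \<Rightarrow> nat list option" where
  "word_act w \<alpha> = foldr (\<lambda>i acc. Option.bind acc (box_op i)) w (Some \<alpha>)"

text \<open>Reverse k-hookword (0-indexed: w!0 <= ... <= w!k > w!(k+1) > ... > w!(n-1)).\<close>
definition is_rev_hookword :: "nat list \<Rightarrow> nat \<Rightarrow> bool" where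
  "is_rev_hookword w k \<longleftrightarrow> k < length w \<and>
     (\<forall>j. j < k \<longrightarrow> w ! j \<le> w ! (j + 1)) \<and>
     (\<forall>j. k \<le> j \<and> j + 1 < length w \<longrightarrow> w ! j > w ! (j + 1))"

definition asc :: "nat list \<Rightarrow> nat" where
  "asc w = (THE k. is_rev_hookword w k)"

definition CRHW :: "nat \<Rightarrow> nat list set" where
  "CRHW n = {w. length w = n \<and> (\<forall>i\<in>set w. 1 \<le> i) \<and>
                (\<exists>a b. set w = {a..b}) \<and> (\<exists>k. is_rev_hookword w k)}"

end

theory Submission
  imports Defs "HOL-Library.Multiset"
begin


definition step :: "nat \<Rightarrow> nat list \<Rightarrow> nat list option" where
  "step j s = (if j = 0 then None
     else if j = 1 then (if (\<exists>i<length s. s!i = 0)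
            then Some (s[(GREATEST i. i < length s \<and> s!i = 0) := 1]) else None)
     else (if (\<exists>i<length s. s!i = j - 1)
            then Some (s[(LEAST i. i < length s \<and> s!i = j - 1) := j]) else None))"

fun run :: "nat list \<Rightarrow> nat list \<Rightarrow> nat list option" where
  "run [] s = Some s"
| "run (c#cs) s = Option.bind (step c s) (run cs)"

lemma run_append: "run (xs @ ys) s = Option.bind (run xs s) (run ys)"
  by (induction xs arbitrary: s) (auto split: Option.bind_split)

lemma greatest_zero:
  assumes "\<exists>i<length s. s!i = 0"
  shows "(GREATEST i. i < length s \<and> s!i = 0) < length s \<and> s!(GREATEST i. i < length s \<and> s!i = 0) = 0
     \<and> (\<forall>i. i < length s \<and> s!i = 0 \<longrightarrow> i \<le> (GREATEST i. i < length s \<and> s!i = 0))"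
proof -
  obtain i where i: "i < length s" "s!i = 0" using assms by blast
  have b: "\<forall>y. y < length s \<and> s!y = 0 \<longrightarrow> y \<le> length s" by auto
  show ?thesis using GreatestI_nat[of "\<lambda>i. i < length s \<and> s!i = 0" i "length s"]
      Greatest_le_nat[of "\<lambda>i. i < length s \<and> s!i = 0" _ "length s"] i by auto
qed

lemma least_val:
  assumes "\<exists>i<length s. s!i = v"
  shows "(LEAST i. i < length s \<and> s!i = v) < length s \<and> s!(LEAST i. i < length s \<and> s!i = v) = v
     \<and> (\<forall>i. i < length s \<and> s!i = v \<longrightarrow> (LEAST i. i < length s \<and> s!i = v) \<le> i)"
  using assms LeastI_ex[of "\<lambda>i. i < length s \<and> s!i = v"] Least_le[of "\<lambda>i. i < length s \<and> s!i = v"]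
  by auto

lemma step_SomeD:
  assumes "step c s = Some t"
  shows "1 \<le> c \<and> length t = length s \<and> (\<exists>r<length s. s!r = c - 1 \<and> t = s[r := c]
     \<and> (c = 1 \<longrightarrow> (\<forall>i<length s. s!i = 0 \<longrightarrow> i \<le> r))
     \<and> (c \<noteq> 1 \<longrightarrow> (\<forall>i<length s. s!i = c - 1 \<longrightarrow> r \<le> i)))"
proof (cases "c = 1")
  case True
  then have ex: "\<exists>i<length s. s!i = 0" and t: "t = s[(GREATEST i. i < length s \<and> s!i = 0) := 1]"
    using assms by (auto simp: step_def split: if_splits)
  show ?thesis using greatest_zero[OF ex] True t by auto
next
  case False
  have c0: "c \<noteq> 0" using assms unfolding step_def by (cases "c = 0") auto
  then have ex: "\<exists>i<length s. s!i = c - 1" and t: "t = s[(LEAST i. i < length s \<and> s!i = c - 1) := c]"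
    using assms False by (auto simp: step_def split: if_splits)
  show ?thesis using least_val[OF ex] False c0 t by auto
qed

lemma run_mono:
  "run cs s = Some t \<Longrightarrow> length t = length s \<and> (\<forall>i<length s. s!i \<le> t!i)"
proof (induction cs arbitrary: s)
  case Nil then show ?case by simp
next
  case (Cons c cs)
  then obtain u where u: "step c s = Some u" "run cs u = Some t"
    by (cases "step c s") auto
  from step_SomeD[OF u(1)] obtain r where r: "r < length s" "s!r = c - 1" "u = s[r := c]" "1 \<le> c"
    "length u = length s" by blast
  have "\<forall>i<length s. s!i \<le> u!i" using r by (auto simp: nth_list_update)
  then show ?case using Cons.IH[OF u(2)] r by fastforce
qed

lemma run_letters: "run cs s = Some t \<Longrightarrow> \<forall>c\<in>set cs. 1 \<le> c"
proof (induction cs arbitrary: s)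
  case Nil then show ?case by simp
next
  case (Cons c cs)
  then obtain u where u: "step c s = Some u" "run cs u = Some t"
    by (cases "step c s") auto
  then show ?case using Cons.IH[OF u(2)] step_SomeD[OF u(1)] by simp
qed

lemma run_U:
  "run cs s = Some t \<Longrightarrow> i < length s \<Longrightarrow> (\<forall>c\<in>set cs. c \<noteq> Suc (s!i)) \<Longrightarrow> t!i = s!i"
proof (induction cs arbitrary: s)
  case Nil then show ?case by simp
next
  case (Cons c cs)
  then obtain u where u: "step c s = Some u" "run cs u = Some t"
    by (cases "step c s") auto
  from step_SomeD[OF u(1)] obtain r where r: "r < length s" "s!r = c - 1" "u = s[r := c]" "1 \<le> c"
    "length u = length s" by blast
  have "u!i = s!i" using r Cons.prems by (auto simp: nth_list_update)
  then show ?case using Cons.IH[OF u(2)] Cons.prems r by auto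
qed

lemma run_A:
  "run cs s = Some t \<Longrightarrow> i < length s \<Longrightarrow> j \<notin> set cs \<Longrightarrow> s!i < j \<Longrightarrow> t!i < j"
proof (induction cs arbitrary: s)
  case Nil then show ?case by simp
next
  case (Cons c cs)
  then obtain u where u: "step c s = Some u" "run cs u = Some t"
    by (cases "step c s") auto
  from step_SomeD[OF u(1)] obtain r where r: "r < length s" "s!r = c - 1" "u = s[r := c]" "1 \<le> c"
    "length u = length s" by blast
  have "u!i < j" using r Cons.prems by (auto simp: nth_list_update)
  then show ?case using Cons.IH[OF u(2)] Cons.prems r by auto
qed

lemma run_B:
  "run cs s = Some t \<Longrightarrow> i < length s \<Longrightarrow> sorted (rev cs) \<Longrightarrow> t!i \<le> Suc (s!i)"
proof (induction cs arbitrary: s)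
  case Nil then show ?case by simp
next
  case (Cons c cs)
  then obtain u where u: "step c s = Some u" "run cs u = Some t"
    by (cases "step c s") auto
  from step_SomeD[OF u(1)] obtain r where r: "r < length s" "s!r = c - 1" "u = s[r := c]" "1 \<le> c"
    "length u = length s" by blast
  have sc: "sorted (rev cs)" "\<forall>x\<in>set cs. x \<le> c" using Cons.prems(3) by (auto simp: sorted_append)
  show ?case
  proof (cases "r = i")
    case True
    then have "u!i = c" using r by simp
    moreover have "t!i = u!i" using run_U[OF u(2)] r Cons.prems sc \<open>u!i = c\<close> by fastforce
    ultimately show ?thesis using r True by simp
  next
    case False
    then have "u!i = s!i" using r by simp
    then show ?thesis using Cons.IH[OF u(2)] sc r Cons.prems by auto
  qed
qed

lemma run_C:
  "run cs s = Some t \<Longrightarrow> r < i \<Longrightarrow> i < length s \<Longrightarrow> s!r = v \<Longrightarrow> t!r = v \<Longrightarrow> 1 \<le> v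
   \<Longrightarrow> s!i \<le> v \<Longrightarrow> t!i \<le> v"
proof (induction cs arbitrary: s)
  case Nil then show ?case by simp
next
  case (Cons c cs)
  then obtain u where u: "step c s = Some u" "run cs u = Some t"
    by (cases "step c s") auto
  from step_SomeD[OF u(1)] obtain q where q: "q < length s" "s!q = c - 1" "u = s[q := c]" "1 \<le> c"
    "length u = length s"
    "(c = 1 \<longrightarrow> (\<forall>i<length s. s!i = 0 \<longrightarrow> i \<le> q))"
    "(c \<noteq> 1 \<longrightarrow> (\<forall>i<length s. s!i = c - 1 \<longrightarrow> q \<le> i))" by blast
  have rl: "r < length u" using q(5) Cons.prems by simp
  have mono: "u!r \<le> t!r" using run_mono[OF u(2)] rl by blast
  have ur: "u!r = v"
  proof -
    have "s!r \<le> u!r" using q Cons.prems by (cases "q = r") (auto simp: nth_list_update)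
    then show ?thesis using mono Cons.prems by auto
  qed
  have "u!i \<le> v"
  proof (cases "q = i")
    case True
    have "c - 1 \<noteq> v"
    proof
      assume "c - 1 = v"
      then have "c \<noteq> 1" using Cons.prems by auto
      then have "q \<le> r" using q(7) Cons.prems \<open>c - 1 = v\<close> by auto
      then show False using True Cons.prems by auto
    qed
    then have "c - 1 < v" using q True Cons.prems by auto
    then show ?thesis using q True by auto
  next
    case False
    then show ?thesis using q Cons.prems by auto
  qed
  then show ?case using Cons.IH[OF u(2)] Cons.prems q ur by auto
qed


fun runB :: "nat list \<Rightarrow> nat list \<Rightarrow> nat list option" where
  "runB [] s = Some s"
| "runB (c#cs) s = Option.bind (box_op c s) (runB cs)"

lemma runB_append: "runB (xs @ ys) s = Option.bind (runB xs s) (runB ys)"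
  by (induction xs arbitrary: s) (auto split: Option.bind_split)

lemma word_act_runB: "word_act w \<alpha> = runB (rev w) \<alpha>"
proof (induction w)
  case Nil then show ?case by (simp add: word_act_def)
next
  case (Cons x w)
  have "word_act (x#w) \<alpha> = Option.bind (word_act w \<alpha>) (box_op x)"
    by (simp add: word_act_def)
  also have "\<dots> = runB (rev (x#w)) \<alpha>"
  proof -
    have r1: "runB [x] = box_op x"
    proof (rule ext)
      fix s show "runB [x] s = box_op x s" by (cases "box_op x s") auto
    qed
    show ?thesis using Cons by (simp add: runB_append r1)
  qed
  finally show ?case .
qed

lemma box_op_comp:
  assumes "is_composition \<gamma>" "box_op c \<gamma> = Some \<gamma>'"
  shows "is_composition \<gamma>' \<and> length \<gamma>' = length \<gamma> + (if c = 1 then 1 else 0)"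
proof (cases "c = 1")
  case True then show ?thesis using assms by (auto simp: box_op_def is_composition_def)
next
  case False
  then have ex: "\<exists>k<length \<gamma>. \<gamma>!k = c - 1" and g: "\<gamma>' = \<gamma>[(LEAST k. k < length \<gamma> \<and> \<gamma>!k = c - 1) := c]"
    using assms by (auto simp: box_op_def Let_def split: if_splits)
  have "c \<noteq> 0"
  proof
    assume "c = 0"
    then obtain k where "k < length \<gamma>" "\<gamma>!k = 0" using ex by auto
    then show False using assms(1) nth_mem[of k \<gamma>] by (auto simp: is_composition_def)
  qed
  then show ?thesis using g False assms(1)
    by (auto simp: is_composition_def dest!: set_update_subset_insert[THEN subsetD])
qed

definition pad :: "nat \<Rightarrow> nat list \<Rightarrow> nat list" where
  "pad k \<gamma> = replicate k 0 @ \<gamma>"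

lemma step_pad:
  assumes "is_composition \<gamma>" "c \<ge> 1"
  shows "step c (pad k \<gamma>) = (case box_op c \<gamma> of None \<Rightarrow> None
     | Some \<gamma>' \<Rightarrow> if c = 1 \<and> k = 0 then None else Some (pad (if c = 1 then k - 1 else k) \<gamma>'))"
proof (cases "c = 1")
  case True
  show ?thesis
  proof (cases "k = 0")
    case True
    then have "\<not> (\<exists>i<length (pad k \<gamma>). pad k \<gamma> ! i = 0)" using assms(1)
      by (auto simp: pad_def is_composition_def)
    then show ?thesis using \<open>c = 1\<close> True by (simp add: step_def box_op_def)
  next
    case False
    have z: "\<And>i. i < length (pad k \<gamma>) \<Longrightarrow> (pad k \<gamma> ! i = 0) = (i < k)"
      using assms(1) by (auto simp: pad_def nth_append is_composition_def)
    have "(GREATEST i. i < length (pad k \<gamma>) \<and> pad k \<gamma> ! i = 0) = k - 1"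
    proof (rule Greatest_equality)
      show "k - 1 < length (pad k \<gamma>) \<and> pad k \<gamma> ! (k - 1) = 0" using z False by (auto simp: pad_def)
      show "\<And>y. y < length (pad k \<gamma>) \<and> pad k \<gamma> ! y = 0 \<Longrightarrow> y \<le> k - 1" using z by fastforce
    qed
    moreover have "(pad k \<gamma>)[k - 1 := 1] = pad (k - 1) (1 # \<gamma>)"
      using False by (cases k) (auto simp: pad_def list_update_append replicate_append_same[symmetric]
          simp del: replicate_append_same)
    moreover have "\<exists>i<length (pad k \<gamma>). pad k \<gamma> ! i = 0" using z False by (auto simp: pad_def)
    ultimately show ?thesis using \<open>c = 1\<close> False by (simp add: step_def box_op_def)
  qed
next
  case False
  then have c2: "c \<ge> 2" using assms by auto
  have e: "(\<exists>i<length (pad k \<gamma>). pad k \<gamma> ! i = c - 1) = (\<exists>i<length \<gamma>. \<gamma> ! i = c - 1)"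
  proof
    assume "\<exists>i<length (pad k \<gamma>). pad k \<gamma> ! i = c - 1"
    then obtain i where i: "i < length (pad k \<gamma>)" "pad k \<gamma> ! i = c - 1" by blast
    then have "\<not> i < k" using c2 by (auto simp: pad_def nth_append)
    then show "\<exists>i<length \<gamma>. \<gamma> ! i = c - 1" using i
      by (auto simp: pad_def nth_append intro!: exI[of _ "i - k"])
  next
    assume "\<exists>i<length \<gamma>. \<gamma> ! i = c - 1"
    then obtain i where i: "i < length \<gamma>" "\<gamma> ! i = c - 1" by blast
    then show "\<exists>i<length (pad k \<gamma>). pad k \<gamma> ! i = c - 1"
      by (auto simp: pad_def nth_append intro!: exI[of _ "k + i"])
  qed
  show ?thesis
  proof (cases "\<exists>i<length \<gamma>. \<gamma> ! i = c - 1")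
    case False
    then show ?thesis using e \<open>c \<noteq> 1\<close> c2 unfolding step_def box_op_def by auto
  next
    case True
    define l where "l = (LEAST i. i < length \<gamma> \<and> \<gamma>!i = c - 1)"
    have l: "l < length \<gamma>" "\<gamma>!l = c - 1" "\<And>i. i < length \<gamma> \<Longrightarrow> \<gamma>!i = c - 1 \<Longrightarrow> l \<le> i"
      using least_val[OF True] unfolding l_def by auto
    have "(LEAST i. i < length (pad k \<gamma>) \<and> pad k \<gamma> ! i = c - 1) = k + l"
    proof (rule Least_equality)
      show "k + l < length (pad k \<gamma>) \<and> pad k \<gamma> ! (k + l) = c - 1" using l by (auto simp: pad_def nth_append)
      fix y assume y: "y < length (pad k \<gamma>) \<and> pad k \<gamma> ! y = c - 1"
      then have "\<not> y < k" using c2 by (auto simp: pad_def nth_append)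
      then have "\<gamma> ! (y - k) = c - 1" "y - k < length \<gamma>" using y by (auto simp: pad_def nth_append)
      then show "k + l \<le> y" using l(3) \<open>\<not> y < k\<close> by fastforce
    qed
    moreover have "(pad k \<gamma>)[k + l := c] = pad k (\<gamma>[l := c])"
      by (simp add: pad_def list_update_append)
    ultimately show ?thesis using True e \<open>c \<noteq> 1\<close> c2
      by (simp add: step_def box_op_def Let_def l_def)
  qed
qed

definition count1 :: "nat list \<Rightarrow> nat" where "count1 cs = length (filter (\<lambda>x. x = 1) cs)"

lemma run_pad:
  assumes "is_composition \<gamma>" "\<forall>c\<in>set cs. c \<ge> 1"
  shows "run cs (pad k \<gamma>) = (case runB cs \<gamma> of None \<Rightarrow> None
     | Some \<gamma>' \<Rightarrow> if count1 cs \<le> k then Some (pad (k - count1 cs) \<gamma>') else None)"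
  using assms
proof (induction cs arbitrary: k \<gamma>)
  case Nil then show ?case by (simp add: count1_def)
next
  case (Cons c cs)
  show ?case
  proof (cases "box_op c \<gamma>")
    case None
    then show ?thesis using step_pad[OF Cons.prems(1), of c k] Cons.prems by simp
  next
    case (Some \<gamma>1)
    have comp1: "is_composition \<gamma>1" using box_op_comp[OF Cons.prems(1) Some] by simp
    show ?thesis
    proof (cases "c = 1 \<and> k = 0")
      case True
      then show ?thesis using step_pad[OF Cons.prems(1), of c k] Cons.prems Some
        by (auto simp: count1_def split: option.splits)
    next
      case False
      have st: "step c (pad k \<gamma>) = Some (pad (if c = 1 then k - 1 else k) \<gamma>1)"
        using step_pad[OF Cons.prems(1), of c k] Cons.prems Some False by simp
      have IH: "run cs (pad (if c = 1 then k - 1 else k) \<gamma>1) = (case runB cs \<gamma>1 of None \<Rightarrow> None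
     | Some \<gamma>' \<Rightarrow> if count1 cs \<le> (if c = 1 then k - 1 else k) then Some (pad ((if c = 1 then k - 1 else k) - count1 cs) \<gamma>') else None)"
        using Cons.IH[OF comp1] Cons.prems by simp
      show ?thesis using st IH Some False
        by (auto simp: count1_def split: option.splits)
    qed
  qed
qed

lemma runB_len:
  "is_composition \<gamma> \<Longrightarrow> runB cs \<gamma> = Some \<gamma>' \<Longrightarrow> is_composition \<gamma>' \<and> length \<gamma>' = length \<gamma> + count1 cs"
proof (induction cs arbitrary: \<gamma>)
  case Nil then show ?case by (simp add: count1_def)
next
  case (Cons c cs)
  then obtain \<gamma>1 where g: "box_op c \<gamma> = Some \<gamma>1" "runB cs \<gamma>1 = Some \<gamma>'" by (cases "box_op c \<gamma>") auto
  show ?case using box_op_comp[OF Cons.prems(1) g(1)] Cons.IH[OF _ g(2)] by (auto simp: count1_def)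
qed

lemma word_act_iff_run:
  assumes "is_composition \<alpha>" "is_composition \<beta>" "length \<alpha> \<le> length \<beta>" "\<forall>c\<in>set w. c \<ge> 1"
  shows "word_act w \<alpha> = Some \<beta> \<longleftrightarrow> run (rev w) (pad (length \<beta> - length \<alpha>) \<alpha>) = Some \<beta>"
proof
  assume h: "word_act w \<alpha> = Some \<beta>"
  then have rb: "runB (rev w) \<alpha> = Some \<beta>" by (simp add: word_act_runB)
  have "length \<beta> = length \<alpha> + count1 (rev w)" using runB_len[OF assms(1) rb] by simp
  then show "run (rev w) (pad (length \<beta> - length \<alpha>) \<alpha>) = Some \<beta>"
    using run_pad[OF assms(1), of "rev w"] assms(4) rb by (simp add: pad_def)
next
  assume h: "run (rev w) (pad (length \<beta> - length \<alpha>) \<alpha>) = Some \<beta>"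
  then obtain \<gamma>' where g: "runB (rev w) \<alpha> = Some \<gamma>'" "count1 (rev w) \<le> length \<beta> - length \<alpha>"
     "pad (length \<beta> - length \<alpha> - count1 (rev w)) \<gamma>' = \<beta>"
    using run_pad[OF assms(1), of "rev w"] assms(4) by (auto split: option.splits if_splits)
  have "length \<beta> - length \<alpha> - count1 (rev w) = 0"
  proof (rule ccontr)
    assume "length \<beta> - length \<alpha> - count1 (rev w) \<noteq> 0"
    then obtain d where d: "length \<beta> - length \<alpha> - count1 (rev w) = Suc d" using not0_implies_Suc by blast
    then have "\<beta> = 0 # pad d \<gamma>'" using g(3) by (simp add: pad_def)
    then have "\<beta> ! 0 = 0" "\<beta> \<noteq> []" by auto
    then show False using assms(2) nth_mem[of 0 \<beta>] by (auto simp: is_composition_def)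
  qed
  then show "word_act w \<alpha> = Some \<beta>" using g by (simp add: word_act_runB pad_def)
qed


definition PP :: "nat list \<Rightarrow> nat list \<Rightarrow> nat list" where
  "PP \<alpha> \<gamma> = pad (length \<gamma> - length \<alpha>) \<alpha>"

definition Inv :: "nat list \<Rightarrow> nat list \<Rightarrow> bool" where
  "Inv \<alpha> \<gamma> \<longleftrightarrow> is_composition \<gamma> \<and> length \<alpha> \<le> length \<gamma> \<and>
     (\<forall>i<length \<gamma>. PP \<alpha> \<gamma> ! i \<le> \<gamma> ! i) \<and>
     (\<forall>r j x. r < length \<gamma> \<and> PP \<alpha> \<gamma> ! r < j \<and> j \<le> \<gamma> ! r \<and> 2 \<le> j \<and> x < r \<and>
        PP \<alpha> \<gamma> ! x = j - 1 \<and> \<gamma> ! x = j - 1 \<longrightarrow> False)"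

lemma Inv_refl: "is_composition \<alpha> \<Longrightarrow> Inv \<alpha> \<alpha>"
  by (auto simp: Inv_def PP_def pad_def)

lemma Inv_cover:
  assumes "Inv \<alpha> \<gamma>" "comp_cover \<gamma> \<delta>"
  shows "Inv \<alpha> \<delta> \<and> sum_list \<delta> = Suc (sum_list \<gamma>)"
proof -
  have I: "is_composition \<gamma>" "length \<alpha> \<le> length \<gamma>" "\<forall>i<length \<gamma>. PP \<alpha> \<gamma> ! i \<le> \<gamma> ! i"
     "\<And>r j x. r < length \<gamma> \<Longrightarrow> PP \<alpha> \<gamma> ! r < j \<Longrightarrow> j \<le> \<gamma> ! r \<Longrightarrow> 2 \<le> j \<Longrightarrow> x < r \<Longrightarrow>
        PP \<alpha> \<gamma> ! x = j - 1 \<Longrightarrow> \<gamma> ! x = j - 1 \<Longrightarrow> False"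
    using assms(1) unfolding Inv_def by blast+
  from assms(2) consider (new) "\<delta> = 1 # \<gamma>"
    | (ext) k where "k < length \<gamma>" "\<delta> = \<gamma>[k := \<gamma> ! k + 1]" "\<forall>i < k. \<gamma> ! i \<noteq> \<gamma> ! k"
    unfolding comp_cover_def by blast
  then show ?thesis
  proof cases
    case new
    have P: "PP \<alpha> \<delta> = 0 # PP \<alpha> \<gamma>"
      using I(2) new by (simp add: PP_def pad_def Suc_diff_le)
    have c: "is_composition \<delta>" using I(1) new by (simp add: is_composition_def)
    have l: "length \<alpha> \<le> length \<delta>" using I(2) new by simp
    have cont: "\<forall>i<length \<delta>. PP \<alpha> \<delta> ! i \<le> \<delta> ! i"
    proof (intro allI impI)
      fix i assume "i < length \<delta>"
      then show "PP \<alpha> \<delta> ! i \<le> \<delta> ! i" using I(3) P new by (cases i) auto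
    qed
    have cc: "\<forall>r j x. r < length \<delta> \<and> PP \<alpha> \<delta> ! r < j \<and> j \<le> \<delta> ! r \<and> 2 \<le> j \<and> x < r \<and>
        PP \<alpha> \<delta> ! x = j - 1 \<and> \<delta> ! x = j - 1 \<longrightarrow> False"
    proof (intro allI impI)
      fix r j x assume h: "r < length \<delta> \<and> PP \<alpha> \<delta> ! r < j \<and> j \<le> \<delta> ! r \<and> 2 \<le> j \<and> x < r \<and>
        PP \<alpha> \<delta> ! x = j - 1 \<and> \<delta> ! x = j - 1"
      then obtain r' where r': "r = Suc r'" using new by (cases r) auto
      show False
      proof (cases x)
        case 0 then show False using h P by auto
      next
        case (Suc x')
        then show False using I(4)[of r' j x'] h r' P new by auto
      qed
    qed
    show ?thesis using c l cont cc new by (simp add: Inv_def)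
  next
    case ext
    have P: "PP \<alpha> \<delta> = PP \<alpha> \<gamma>" using ext by (simp add: PP_def)
    have c: "is_composition \<delta>" using I(1) ext
      by (auto simp: is_composition_def dest!: set_update_subset_insert[THEN subsetD])
    have l: "length \<alpha> \<le> length \<delta>" using I(2) ext by simp
    have ge: "\<forall>i<length \<gamma>. \<gamma> ! i \<le> \<delta> ! i" using ext by (auto simp: nth_list_update)
    have cont: "\<forall>i<length \<delta>. PP \<alpha> \<delta> ! i \<le> \<delta> ! i"
      using I(3) ge P ext by fastforce
    have cc: "\<forall>r j x. r < length \<delta> \<and> PP \<alpha> \<delta> ! r < j \<and> j \<le> \<delta> ! r \<and> 2 \<le> j \<and> x < r \<and>
        PP \<alpha> \<delta> ! x = j - 1 \<and> \<delta> ! x = j - 1 \<longrightarrow> False"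
    proof (intro allI impI)
      fix r j x assume h: "r < length \<delta> \<and> PP \<alpha> \<delta> ! r < j \<and> j \<le> \<delta> ! r \<and> 2 \<le> j \<and> x < r \<and>
        PP \<alpha> \<delta> ! x = j - 1 \<and> \<delta> ! x = j - 1"
      have xl: "x < length \<gamma>" using h ext by auto
      have gx: "\<gamma> ! x = j - 1" using I(3) ge h P xl by (metis le_antisym)
      show False
      proof (cases "r = k \<and> j = \<gamma> ! k + 1")
        case True
        have "x \<noteq> k" using h True by auto
        then have "\<delta> ! x = \<gamma> ! x" using ext by simp
        then show False using ext(3) True h gx by auto
      next
        case False
        have "j \<le> \<gamma> ! r"
        proof (cases "r = k")
          case True then show ?thesis using h ext False by auto
        next
          case f: False then show ?thesis using h ext by auto
        qed
        then show False using I(4)[of r j x] h P ext gx by auto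
      qed
    qed
    have "sum_list \<delta> = Suc (sum_list \<gamma>)"
      using ext by (simp add: sum_list_update)
    then show ?thesis using c l cont cc by (simp add: Inv_def)
  qed
qed

lemma comp_less_Inv:
  assumes "is_composition \<alpha>" "comp_less \<alpha> \<beta>"
  shows "Inv \<alpha> \<beta> \<and> sum_list \<alpha> < sum_list \<beta>"
  using assms(2) unfolding comp_less_def
proof (induction rule: tranclp_induct)
  case (base y)
  then show ?case using Inv_cover[OF Inv_refl[OF assms(1)]] by auto
next
  case (step y z)
  then show ?case using Inv_cover by fastforce
qed


lemma step_exists:
  assumes "1 \<le> c" "\<exists>i<length s. s!i = c - 1"
  shows "\<exists>t. step c s = Some t"
  using assms by (auto simp: step_def)

definition Sset :: "nat list \<Rightarrow> nat list \<Rightarrow> (nat \<times> nat) set" where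
  "Sset \<alpha> \<beta> = {(i, j). i < length \<beta> \<and> PP \<alpha> \<beta> ! i < j \<and> j \<le> \<beta> ! i}"

locale strip =
  fixes \<alpha> \<beta> :: "nat list" and a b :: nat
  assumes compa: "is_composition \<alpha>"
    and inv: "Inv \<alpha> \<beta>"
    and nc1: "\<And>i i'. (i, 1) \<in> Sset \<alpha> \<beta> \<Longrightarrow> (i, 2) \<in> Sset \<alpha> \<beta> \<Longrightarrow> (i', 1) \<in> Sset \<alpha> \<beta> \<Longrightarrow> i' \<le> i"
    and nc2: "\<And>i j i'. 2 \<le> j \<Longrightarrow> (i, j) \<in> Sset \<alpha> \<beta> \<Longrightarrow> (i, Suc j) \<in> Sset \<alpha> \<beta> \<Longrightarrow> (i', j) \<in> Sset \<alpha> \<beta> \<Longrightarrow> i \<le> i'"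
    and supp: "snd ` Sset \<alpha> \<beta> = {a..b}"
    and ab: "a \<le> b"
begin

abbreviation "lb \<equiv> length \<beta>"
abbreviation "P \<equiv> PP \<alpha> \<beta>"
abbreviation "S \<equiv> Sset \<alpha> \<beta>"

definition R :: "nat \<Rightarrow> nat set" where "R j = {i. i < lb \<and> P ! i < j \<and> j \<le> \<beta> ! i}"
definition cc :: "nat \<Rightarrow> nat" where "cc j = card (R j)"
definition rho :: "nat \<Rightarrow> nat" where "rho j = (if j = 1 then Max (R 1) else Min (R j))"
abbreviation "E \<equiv> E_set S"
abbreviation "NE \<equiv> NE_set S"
definition valid :: "nat set \<Rightarrow> bool" where "valid D \<longleftrightarrow> E \<subseteq> D \<and> D \<subseteq> E \<union> NE"

lemma compb: "is_composition \<beta>" using inv by (simp add: Inv_def)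
lemma lenab: "length \<alpha> \<le> lb" using inv by (simp add: Inv_def)
lemma lenP: "length P = lb" using lenab by (simp add: PP_def pad_def)
lemma cont: "i < lb \<Longrightarrow> P ! i \<le> \<beta> ! i" using inv by (simp add: Inv_def)
lemma Ccond: "r < lb \<Longrightarrow> P ! r < j \<Longrightarrow> j \<le> \<beta> ! r \<Longrightarrow> 2 \<le> j \<Longrightarrow> x < r \<Longrightarrow> P ! x = j - 1
   \<Longrightarrow> \<beta> ! x = j - 1 \<Longrightarrow> False"
  using inv unfolding Inv_def by blast
lemma bpos: assumes "i < lb" shows "1 \<le> \<beta> ! i"
proof -
  have "\<beta> ! i \<in> set \<beta>" using assms by simp
  then have "0 < \<beta> ! i" using compb unfolding is_composition_def by blast
  then show ?thesis by simp
qed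
lemma S_iff: "(i, j) \<in> S \<longleftrightarrow> i \<in> R j" by (simp add: Sset_def R_def)
lemma finR: "finite (R j)" by (simp add: R_def)
lemma R_ne: "R j \<noteq> {} \<longleftrightarrow> a \<le> j \<and> j \<le> b"
proof -
  have "R j \<noteq> {} \<longleftrightarrow> j \<in> snd ` S" using S_iff by force
  then show ?thesis using supp by simp
qed
lemma a1: "1 \<le> a"
proof -
  have "R a \<noteq> {}" using R_ne ab by simp
  then obtain i where "i \<in> R a" by blast
  then show ?thesis by (auto simp: R_def)
qed

lemma rho_R: "a \<le> j \<Longrightarrow> j \<le> b \<Longrightarrow> rho j \<in> R j"
  using R_ne[of j] Max_in[OF finR[of j]] Min_in[OF finR[of j]] by (auto simp: rho_def)

lemma rho_pair: assumes "(i, j) \<in> S" "(i, Suc j) \<in> S" shows "rho j = i"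
proof (cases "j = 1")
  case True
  have "i \<in> R 1" using assms True S_iff by simp
  moreover have "\<And>i'. i' \<in> R 1 \<Longrightarrow> i' \<le> i"
  proof -
    fix i' assume "i' \<in> R 1"
    have "(i, 1) \<in> S" "(i, 2) \<in> S" using assms True by (auto simp: numeral_2_eq_2)
    then show "i' \<le> i" using nc1 \<open>i' \<in> R 1\<close> S_iff by blast
  qed
  ultimately show ?thesis using True finR by (simp add: rho_def Max_eqI)
next
  case False
  have j0: "j \<noteq> 0" using assms by (auto simp: Sset_def)
  then have "2 \<le> j" using False by auto
  have "i \<in> R j" using assms S_iff by simp
  moreover have "\<And>i'. i' \<in> R j \<Longrightarrow> i \<le> i'" using nc2[OF \<open>2 \<le> j\<close> assms] S_iff by auto
  ultimately show ?thesis using False finR by (simp add: rho_def Min_eqI)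
qed

lemma E_iff: "j \<in> E \<longleftrightarrow> (\<exists>i. (i, j) \<in> S \<and> (i, Suc j) \<in> S)" by (simp add: E_set_def)

lemma E_sub: "E \<subseteq> {a..<b}"
proof
  fix j assume "j \<in> E"
  then obtain i where "(i, j) \<in> S" "(i, Suc j) \<in> S" using E_iff by blast
  then have "R j \<noteq> {}" "R (Suc j) \<noteq> {}" using S_iff by auto
  then show "j \<in> {a..<b}" using R_ne by auto
qed

lemma NE_sub: "NE \<subseteq> {a..<b}"
proof
  fix j assume "j \<in> NE"
  then have "j \<in> snd ` S" "\<exists>i. (i, j + 1) \<in> S" by (auto simp: NE_set_def supp_def)
  then have "j \<in> {a..b}" "Suc j \<in> {a..b}" using supp by force+
  then show "j \<in> {a..<b}" by auto
qed

lemma E_NE: "E \<inter> NE = {}"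
  by (auto simp: E_set_def NE_set_def)

lemma NE_prop: "j \<in> NE \<Longrightarrow> (i1, Suc j) \<in> S \<Longrightarrow> (i2, j) \<in> S \<Longrightarrow> i1 < i2"
  by (auto simp: NE_set_def)

lemma P_zero: "i < lb \<Longrightarrow> P ! i = 0 \<longleftrightarrow> i < lb - length \<alpha>"
  using compa lenab nth_mem[of "i - (lb - length \<alpha>)" \<alpha>]
  by (auto simp: PP_def pad_def nth_append is_composition_def)

definition sig :: "nat set \<Rightarrow> nat list" where
  "sig Q = map (\<lambda>i. P ! i + card {d \<in> Q. rho d = i}) [0..<lb]"

lemma sig_nth: "i < lb \<Longrightarrow> sig Q ! i = P ! i + card {d \<in> Q. rho d = i}"
  by (simp add: sig_def)
lemma sig_len: "length (sig Q) = lb" by (simp add: sig_def)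

lemma K_sub: assumes "D \<subseteq> {a..<b}" "Q \<subseteq> D" shows "{d \<in> Q. rho d = i} \<subseteq> {P ! i<..\<beta> ! i}"
proof
  fix d assume "d \<in> {d \<in> Q. rho d = i}"
  then have "d \<in> Q" "rho d = i" by auto
  then have "rho d \<in> R d" using rho_R assms by auto
  then show "d \<in> {P ! i<..\<beta> ! i}" using \<open>rho d = i\<close> by (auto simp: R_def)
qed

lemma seg: assumes "valid D" "i < lb" "P ! i < d" "Suc d \<le> \<beta> ! i" shows "d \<in> D \<and> rho d = i"
proof -
  have "(i, d) \<in> S" "(i, Suc d) \<in> S" using assms by (auto simp: Sset_def)
  then show ?thesis using rho_pair E_iff assms(1) by (auto simp: valid_def)
qed

lemma blocker:
  assumes "valid D" "D \<subseteq> {a..<b}" "x < y" "(y, j) \<in> S" "2 \<le> j" "x < lb" "\<beta> ! x = j - 1"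
    "P ! x = j - 1 \<or> (j - 1 \<in> D \<and> rho (j - 1) = x)"
  shows False
proof -
  have y: "y < lb" "P ! y < j" "j \<le> \<beta> ! y" using assms(4) by (auto simp: Sset_def)
  from assms(8) show False
  proof
    assume "P ! x = j - 1"
    then show False using Ccond[OF y, of x] assms by auto
  next
    assume h: "j - 1 \<in> D \<and> rho (j - 1) = x"
    then have "j - 1 \<in> E \<or> j - 1 \<in> NE" using assms(1) by (auto simp: valid_def)
    then show False
    proof
      assume "j - 1 \<in> E"
      then obtain i where i: "(i, j - 1) \<in> S" "(i, Suc (j - 1)) \<in> S" using E_iff by blast
      then have "rho (j - 1) = i" using rho_pair by blast
      then have "i = x" using h by simp
      then show False using i assms by (auto simp: Sset_def)
    next
      assume ne: "j - 1 \<in> NE"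
      have "rho (j - 1) \<in> R (j - 1)" using h assms(2) rho_R by auto
      then have "(x, j - 1) \<in> S" using h S_iff by simp
      moreover have "(y, Suc (j - 1)) \<in> S" using assms by simp
      ultimately have "y < x" using NE_prop[OF ne] by blast
      then show False using assms by simp
    qed
  qed
qed

lemma stage1_step:
  assumes V: "valid D" and Dsub: "D \<subseteq> {a..<b}" and jD: "j \<in> D" and Q: "Q = {d \<in> D. d < j}"
  shows "step j (sig Q) = Some (sig (insert j Q))"
proof -
  have fD: "finite D" using Dsub finite_subset by blast
  have QD: "Q \<subseteq> D" using Q by auto
  have fQ: "finite Q" using fD QD finite_subset by blast
  have jab: "a \<le> j" "j < b" using jD Dsub by auto
  define r where "r = rho j"
  have rR: "r \<in> R j" using rho_R jab unfolding r_def by auto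
  then have r: "r < lb" "P ! r < j" "j \<le> \<beta> ! r" by (auto simp: R_def)
  have Kr: "{d \<in> Q. rho d = r} = {P ! r<..<j}"
  proof
    show "{d \<in> Q. rho d = r} \<subseteq> {P ! r<..<j}" using K_sub[OF Dsub QD, of r] Q by auto
  next
    show "{P ! r<..<j} \<subseteq> {d \<in> Q. rho d = r}"
    proof
      fix d assume "d \<in> {P ! r<..<j}"
      then show "d \<in> {d \<in> Q. rho d = r}" using seg[OF V r(1), of d] r Q by auto
    qed
  qed
  have sr: "sig Q ! r = j - 1" using Kr r by (simp add: sig_nth)
  have j1: "1 \<le> j" using jab a1 by simp
  obtain t where t: "step j (sig Q) = Some t"
    using step_exists[OF j1, of "sig Q"] sr r sig_len by auto
  from step_SomeD[OF t] obtain r' where r': "r' < lb" "sig Q ! r' = j - 1" "t = (sig Q)[r' := j]"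
    "(j = 1 \<longrightarrow> (\<forall>i<lb. sig Q ! i = 0 \<longrightarrow> i \<le> r'))"
    "(j \<noteq> 1 \<longrightarrow> (\<forall>i<lb. sig Q ! i = j - 1 \<longrightarrow> r' \<le> i))" using sig_len by auto
  have "r' = r"
  proof (cases "j = 1")
    case True
    then have "Q = {}" using Q Dsub a1 by auto
    then have "P ! r' = 0" using r' True by (simp add: sig_nth)
    then have "r' \<in> R 1" using r' bpos by (auto simp: R_def)
    then have "r' \<le> r" using True finR by (simp add: r_def rho_def)
    moreover have "r \<le> r'" using r'(4) True sr r by auto
    ultimately show ?thesis by simp
  next
    case False
    have j2: "2 \<le> j" using False j1 by simp
    have "r' \<le> r" using r'(5) False sr r by auto
    moreover have "\<not> r' < r"
    proof
      assume lt: "r' < r"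
      let ?K = "{d \<in> Q. rho d = r'}"
      have Kfin: "finite ?K" using fQ by simp
      have Ks: "?K \<subseteq> {P ! r'<..\<beta> ! r'}" using K_sub[OF Dsub QD] by blast
      have Kc: "P ! r' + card ?K = j - 1" using r' by (simp add: sig_nth)
      have nR: "r' \<notin> R j" using lt finR False unfolding r_def rho_def by (metis Min_le not_le)
      have "P ! r' < j" using Kc j1 by linarith
      then have bl: "\<beta> ! r' < j" using nR r' by (auto simp: R_def)
      have "card ?K \<le> \<beta> ! r' - P ! r'" using card_mono[OF _ Ks] by simp
      then have beq: "\<beta> ! r' = j - 1" using Kc bl cont[OF r'(1)] by linarith
      have "P ! r' = j - 1 \<or> (j - 1 \<in> D \<and> rho (j - 1) = r')"
      proof (cases "P ! r' = j - 1")
        case True then show ?thesis by simp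
      next
        case False
        have "j - 1 \<in> ?K"
        proof (rule ccontr)
          assume "j - 1 \<notin> ?K"
          then have "?K \<subseteq> {P ! r'<..<j - 1}" using Ks beq by fastforce
          then have "card ?K \<le> j - 1 - Suc (P ! r')" using card_mono[of "{P ! r'<..<j - 1}"] by simp
          then show False using Kc False by linarith
        qed
        then show ?thesis using QD by auto
      qed
      then show False using blocker[OF V Dsub lt _ j2 r'(1) beq] rR S_iff by blast
    qed
    ultimately show ?thesis by simp
  qed
  have "t = sig (insert j Q)"
  proof (rule nth_equalityI)
    show "length t = length (sig (insert j Q))" using r' sig_len by simp
    fix i assume "i < length t"
    then have il: "i < lb" using r' sig_len by simp
    have jQ: "j \<notin> Q" using Q by simp
    show "t ! i = sig (insert j Q) ! i"
    proof (cases "i = r")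
      case True
      have "{d \<in> insert j Q. rho d = r} = insert j {d \<in> Q. rho d = r}" using r_def by auto
      then have "card {d \<in> insert j Q. rho d = r} = Suc (card {d \<in> Q. rho d = r})"
        using fQ jQ by simp
      then show ?thesis using True r' \<open>r' = r\<close> sr il r Kr by (simp add: sig_nth sig_len)
    next
      case False
      have "{d \<in> insert j Q. rho d = i} = {d \<in> Q. rho d = i}" using False r_def by auto
      then show ?thesis using False r' \<open>r' = r\<close> il by (simp add: sig_nth)
    qed
  qed
  then show ?thesis using t by simp
qed

lemma sig_empty: "sig {} = P"
  by (rule nth_equalityI) (auto simp: sig_len lenP sig_nth)

lemma strict_take:
  fixes ds :: "nat list"
  assumes "sorted_wrt (<) ds" "k < length ds"
  shows "set (take k ds) = {d \<in> set ds. d < ds ! k}"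
proof
  show "set (take k ds) \<subseteq> {d \<in> set ds. d < ds ! k}"
  proof
    fix d assume "d \<in> set (take k ds)"
    then obtain i where "i < k" "d = ds ! i" using assms by (auto simp: in_set_conv_nth)
    then show "d \<in> {d \<in> set ds. d < ds ! k}" using assms sorted_wrt_nth_less[OF assms(1)] by auto
  qed
next
  show "{d \<in> set ds. d < ds ! k} \<subseteq> set (take k ds)"
  proof
    fix d assume "d \<in> {d \<in> set ds. d < ds ! k}"
    then obtain i where i: "i < length ds" "d = ds ! i" "ds ! i < ds ! k" by (auto simp: in_set_conv_nth)
    have "i < k"
    proof (rule ccontr)
      assume "\<not> i < k"
      then have "k = i \<or> k < i" by auto
      then show False
      proof
        assume "k = i" then show False using i(3) by simp
      next
        assume "k < i"
        then have "ds ! k < ds ! i" using sorted_wrt_nth_less[OF assms(1) \<open>k < i\<close> i(1)] by simp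
        then show False using i(3) by simp
      qed
    qed
    then show "d \<in> set (take k ds)" using i assms by (auto simp: in_set_conv_nth)
  qed
qed

lemma stage1:
  assumes V: "valid D" and Dsub: "D \<subseteq> {a..<b}"
  shows "run (sorted_list_of_set D) P = Some (sig D)"
proof -
  have fD: "finite D" using Dsub finite_subset by blast
  define ds where "ds = sorted_list_of_set D"
  have sw: "sorted_wrt (<) ds" unfolding ds_def by simp
  have sd: "set ds = D" using fD unfolding ds_def by simp
  have "\<forall>k \<le> length ds. run (take k ds) P = Some (sig (set (take k ds)))"
  proof (intro allI impI)
    fix k assume "k \<le> length ds"
    then show "run (take k ds) P = Some (sig (set (take k ds)))"
    proof (induction k)
      case 0 then show ?case by (simp add: sig_empty)
    next
      case (Suc k)
      then have kl: "k < length ds" by simp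
      have tk: "take (Suc k) ds = take k ds @ [ds ! k]" using kl by (simp add: take_Suc_conv_app_nth)
      have st: "set (take k ds) = {d \<in> D. d < ds ! k}" using strict_take[OF sw kl] sd by simp
      have jD: "ds ! k \<in> D" using kl sd nth_mem by blast
      have "step (ds ! k) (sig (set (take k ds))) = Some (sig (insert (ds ! k) (set (take k ds))))"
        using stage1_step[OF V Dsub jD st] .
      then show ?case using Suc kl tk by (simp add: run_append)
    qed
  qed
  then show ?thesis using sd unfolding ds_def[symmetric] by (metis order_refl take_all)
qed

end


context strip begin

lemma F1:
  assumes V: "valid D" and Dsub: "D \<subseteq> {a..<b}" and i: "i < lb"
  shows "sig D ! i \<le> \<beta> ! i \<and> \<beta> ! i \<le> Suc (sig D ! i)"
proof -
  have fD: "finite D" using Dsub finite_subset by blast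
  let ?K = "{d \<in> D. rho d = i}"
  have Ks: "?K \<subseteq> {P ! i<..\<beta> ! i}" using K_sub[OF Dsub] by blast
  have c1: "card ?K \<le> \<beta> ! i - P ! i" using card_mono[OF _ Ks] by simp
  have sub: "{P ! i<..<\<beta> ! i} \<subseteq> ?K"
  proof
    fix d assume "d \<in> {P ! i<..<\<beta> ! i}"
    then show "d \<in> ?K" using seg[OF V i, of d] by auto
  qed
  have fK: "finite ?K" using fD by simp
  have "card {P ! i<..<\<beta> ! i} \<le> card ?K" by (rule card_mono[OF fK sub])
  then have c2: "\<beta> ! i - Suc (P ! i) \<le> card ?K" by simp
  show ?thesis using c1 c2 cont[OF i] sig_nth[OF i, of D] by linarith
qed

lemma F2:
  assumes V: "valid D" and Dsub: "D \<subseteq> {a..<b}" and i: "i < lb"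
    and eq: "sig D ! i = \<beta> ! i" and lt: "P ! i < \<beta> ! i"
  shows "\<beta> ! i \<in> D \<and> rho (\<beta> ! i) = i"
proof (rule ccontr)
  assume h: "\<not> (\<beta> ! i \<in> D \<and> rho (\<beta> ! i) = i)"
  let ?K = "{d \<in> D. rho d = i}"
  have Ks0: "?K \<subseteq> {P ! i<..\<beta> ! i}" using K_sub[OF Dsub, of D i] by simp
  have Ks: "?K \<subseteq> {P ! i<..<\<beta> ! i}"
  proof
    fix d assume d: "d \<in> ?K"
    then have "d \<noteq> \<beta> ! i" using h by auto
    then show "d \<in> {P ! i<..<\<beta> ! i}" using d Ks0 by fastforce
  qed
  have "card ?K \<le> \<beta> ! i - Suc (P ! i)" using card_mono[OF _ Ks] by simp
  then show False using eq lt i by (simp add: sig_nth)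
qed

lemma F3:
  assumes V: "valid D" and Dsub: "D \<subseteq> {a..<b}" and jD: "j \<in> D" and jE: "j \<notin> E"
  shows "\<beta> ! rho j = j \<and> sig D ! rho j = j \<and> rho j \<in> R j"
proof -
  have fD: "finite D" using Dsub finite_subset by blast
  have rR: "rho j \<in> R j" using rho_R jD Dsub by auto
  let ?i = "rho j"
  have i: "?i < lb" "P ! ?i < j" "j \<le> \<beta> ! ?i" using rR by (auto simp: R_def)
  have bj: "\<beta> ! ?i = j"
  proof (rule ccontr)
    assume "\<beta> ! ?i \<noteq> j"
    then have "(?i, j) \<in> S" "(?i, Suc j) \<in> S" using i by (auto simp: Sset_def)
    then show False using jE E_iff by blast
  qed
  let ?K = "{d \<in> D. rho d = ?i}"
  have "{P ! ?i<..\<beta> ! ?i} \<subseteq> ?K"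
  proof
    fix d assume d: "d \<in> {P ! ?i<..\<beta> ! ?i}"
    show "d \<in> ?K"
    proof (cases "d = j")
      case True then show ?thesis using jD by simp
    next
      case False then show ?thesis using seg[OF V i(1), of d] d bj by auto
    qed
  qed
  then have "card {P ! ?i<..\<beta> ! ?i} \<le> card ?K" using fD by (intro card_mono) auto
  then have "\<beta> ! ?i - P ! ?i \<le> card ?K" by simp
  then have "\<beta> ! ?i \<le> sig D ! ?i" using i by (simp add: sig_nth)
  then show ?thesis using F1[OF V Dsub i(1)] bj rR by simp
qed

definition theta :: "nat set \<Rightarrow> nat \<Rightarrow> nat list" where
  "theta D x = map (\<lambda>i. if sig D ! i < \<beta> ! i \<and> x < \<beta> ! i then \<beta> ! i else sig D ! i) [0..<lb]"
definition NN :: "nat set \<Rightarrow> nat \<Rightarrow> nat set" where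
  "NN D j = {i. i < lb \<and> sig D ! i < \<beta> ! i \<and> \<beta> ! i = j}"
definition fill :: "nat set \<Rightarrow> nat \<Rightarrow> nat set \<Rightarrow> nat list" where
  "fill D j Q = map (\<lambda>i. if i \<in> Q then \<beta> ! i else theta D j ! i) [0..<lb]"

lemma fill_len: "length (fill D j Q) = lb" by (simp add: fill_def)
lemma fill_nth: "i < lb \<Longrightarrow> fill D j Q ! i = (if i \<in> Q then \<beta> ! i else
    (if sig D ! i < \<beta> ! i \<and> j < \<beta> ! i then \<beta> ! i else sig D ! i))"
  by (simp add: fill_def theta_def)

lemma fill_empty: "fill D j {} = theta D j"
  by (rule nth_equalityI) (auto simp: fill_len theta_def fill_nth)

lemma fill_full: "1 \<le> j \<Longrightarrow> fill D j (NN D j) = theta D (j - 1)"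
  by (rule nth_equalityI) (auto simp: fill_len theta_def fill_nth NN_def)

lemma theta_top: assumes "D \<subseteq> {a..<b}" shows "theta D b = sig D"
proof (rule nth_equalityI)
  show "length (theta D b) = length (sig D)" by (simp add: theta_def sig_len)
  fix i assume "i < length (theta D b)"
  then have i: "i < lb" by (simp add: theta_def)
  have "\<not> (sig D ! i < \<beta> ! i \<and> b < \<beta> ! i)"
  proof
    assume h: "sig D ! i < \<beta> ! i \<and> b < \<beta> ! i"
    have "P ! i \<le> sig D ! i" using i by (simp add: sig_nth)
    then have "i \<in> R (\<beta> ! i)" using h i by (auto simp: R_def)
    then show False using R_ne[of "\<beta> ! i"] h by auto
  qed
  then show "theta D b ! i = sig D ! i" using i by (simp add: theta_def)
qed

lemma theta_bot: assumes "1 \<le> a" "valid D" "D \<subseteq> {a..<b}" shows "theta D (a - 1) = \<beta>"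
proof (rule nth_equalityI)
  show "length (theta D (a - 1)) = length \<beta>" by (simp add: theta_def)
  fix i assume "i < length (theta D (a - 1))"
  then have i: "i < lb" by (simp add: theta_def)
  have th: "theta D (a - 1) ! i = (if sig D ! i < \<beta> ! i \<and> a - 1 < \<beta> ! i then \<beta> ! i else sig D ! i)"
    using i by (simp add: theta_def)
  show "theta D (a - 1) ! i = \<beta> ! i"
  proof (cases "sig D ! i < \<beta> ! i")
    case True
    have "P ! i \<le> sig D ! i" using i by (simp add: sig_nth)
    then have "i \<in> R (\<beta> ! i)" using True i by (auto simp: R_def)
    then have "a \<le> \<beta> ! i" using R_ne[of "\<beta> ! i"] by auto
    then show ?thesis using True th assms by simp
  next
    case False
    then have "sig D ! i = \<beta> ! i" using F1[OF assms(2,3) i] by simp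
    then show ?thesis using th by simp
  qed
qed

lemma col_step:
  assumes V: "valid D" and Dsub: "D \<subseteq> {a..<b}" and j: "a \<le> j" "j \<le> b"
    and Q: "Q \<subseteq> NN D j" "Q \<noteq> NN D j"
  shows "\<exists>x \<in> NN D j - Q. step j (fill D j Q) = Some (fill D j (insert x Q))"
proof -
  have j1: "1 \<le> j" using j a1 by simp
  obtain y where y: "y \<in> NN D j" "y \<notin> Q" using Q by blast
  have yl: "y < lb" using y by (simp add: NN_def)
  have yN: "sig D ! y < \<beta> ! y" "\<beta> ! y = j" using y by (auto simp: NN_def)
  have "sig D ! y = j - 1" using yN F1[OF V Dsub yl] by linarith
  then have yv: "fill D j Q ! y = j - 1" using y yl yN by (simp add: fill_nth)
  have vals: "\<And>i. i < lb \<Longrightarrow> fill D j Q ! i = j - 1 \<Longrightarrow>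
      (i \<in> NN D j - Q) \<or> (sig D ! i = j - 1 \<and> \<beta> ! i = j - 1)"
  proof -
    fix i assume i: "i < lb" "fill D j Q ! i = j - 1"
    have f1: "sig D ! i \<le> \<beta> ! i \<and> \<beta> ! i \<le> Suc (sig D ! i)" using F1[OF V Dsub i(1)] .
    show "(i \<in> NN D j - Q) \<or> (sig D ! i = j - 1 \<and> \<beta> ! i = j - 1)"
    proof (cases "i \<in> Q")
      case True
      then have "\<beta> ! i = j" using Q by (auto simp: NN_def)
      then show ?thesis using i True j1 by (simp add: fill_nth)
    next
      case False
      show ?thesis
      proof (cases "sig D ! i < \<beta> ! i \<and> j < \<beta> ! i")
        case True
        then have "fill D j Q ! i = \<beta> ! i" using i False by (simp add: fill_nth)
        then have False using True i(2) by linarith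
        then show ?thesis by simp
      next
        case nt: False
        have "fill D j Q ! i = sig D ! i" using i(1) False nt by (simp add: fill_nth)
        then have "sig D ! i = j - 1" using i(2) by simp
        then show ?thesis using f1 nt False i j1 by (auto simp: NN_def)
      qed
    qed
  qed
  obtain t where t: "step j (fill D j Q) = Some t"
    using step_exists[OF j1, of "fill D j Q"] yv yl fill_len by auto
  from step_SomeD[OF t] obtain r where r: "r < lb" "fill D j Q ! r = j - 1" "t = (fill D j Q)[r := j]"
    "(j = 1 \<longrightarrow> (\<forall>i<lb. fill D j Q ! i = 0 \<longrightarrow> i \<le> r))"
    "(j \<noteq> 1 \<longrightarrow> (\<forall>i<lb. fill D j Q ! i = j - 1 \<longrightarrow> r \<le> i))" using fill_len by auto
  have rN: "r \<in> NN D j - Q"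
  proof (rule ccontr)
    assume nr: "r \<notin> NN D j - Q"
    then have F: "sig D ! r = j - 1" "\<beta> ! r = j - 1" using vals[OF r(1,2)] by auto
    then have j2: "2 \<le> j" using bpos[OF r(1)] by auto
    then have "r \<le> y" using r(5) yv yl by auto
    moreover have "r \<noteq> y" using y nr by auto
    ultimately have ry: "r < y" by simp
    have yS: "(y, j) \<in> S"
    proof -
      have "P ! y \<le> sig D ! y" using yl by (simp add: sig_nth)
      then show ?thesis using y by (auto simp: NN_def Sset_def)
    qed
    have "P ! r = j - 1 \<or> (j - 1 \<in> D \<and> rho (j - 1) = r)"
    proof (cases "P ! r < \<beta> ! r")
      case True
      then show ?thesis using F2[OF V Dsub r(1)] F by simp
    next
      case False
      then show ?thesis using cont[OF r(1)] F by simp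
    qed
    then show False using blocker[OF V Dsub ry yS j2 r(1) F(2)] by blast
  qed
  have "t = fill D j (insert r Q)"
  proof (rule nth_equalityI)
    show "length t = length (fill D j (insert r Q))" using r fill_len by simp
    fix i assume "i < length t"
    then have i: "i < lb" using r fill_len by simp
    have "\<beta> ! r = j" using rN by (simp add: NN_def)
    then show "t ! i = fill D j (insert r Q) ! i" using r i rN
      by (cases "i = r") (auto simp: fill_nth fill_len)
  qed
  then show ?thesis using t rN by blast
qed

lemma finNN: "finite (NN D j)" by (simp add: NN_def)

lemma col:
  assumes V: "valid D" and Dsub: "D \<subseteq> {a..<b}" and j: "a \<le> j" "j \<le> b"
  shows "Q \<subseteq> NN D j \<Longrightarrow> run (replicate (card (NN D j - Q)) j) (fill D j Q) = Some (fill D j (NN D j))"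
proof (induction "card (NN D j - Q)" arbitrary: Q)
  case 0
  then have "Q = NN D j" using finNN by auto
  then show ?case by simp
next
  case (Suc t)
  then have "Q \<noteq> NN D j" by auto
  from col_step[OF V Dsub j Suc.prems this] obtain x where
    x: "x \<in> NN D j - Q" "step j (fill D j Q) = Some (fill D j (insert x Q))" by blast
  have c: "card (NN D j - insert x Q) = t" using Suc.hyps(2) x finNN
    by (metis Diff_insert card_Diff_singleton diff_Suc_1 finite_Diff)
  have "insert x Q \<subseteq> NN D j" using x Suc.prems by auto
  then have "run (replicate t j) (fill D j (insert x Q)) = Some (fill D j (NN D j))"
    using Suc.hyps(1)[of "insert x Q"] c by simp
  then show ?case using x Suc.hyps(2)[symmetric] by simp
qed

lemma card_NN:
  assumes V: "valid D" and Dsub: "D \<subseteq> {a..<b}" and j: "a \<le> j" "j \<le> b"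
  shows "card (NN D j) = cc j - (if j \<in> D then 1 else 0)"
proof -
  define A1 where "A1 = {i \<in> R j. j < \<beta> ! i}"
  define A2 where "A2 = {i \<in> R j. \<beta> ! i = j \<and> sig D ! i = j}"
  have fR: "finite (R j)" by (rule finR)
  have part: "R j = A1 \<union> A2 \<union> NN D j"
  proof
    show "R j \<subseteq> A1 \<union> A2 \<union> NN D j"
    proof
      fix i assume i: "i \<in> R j"
      then have il: "i < lb" by (simp add: R_def)
      show "i \<in> A1 \<union> A2 \<union> NN D j"
        using i F1[OF V Dsub il] by (auto simp: A1_def A2_def NN_def R_def)
    qed
  next
    show "A1 \<union> A2 \<union> NN D j \<subseteq> R j"
    proof
      fix i assume i: "i \<in> A1 \<union> A2 \<union> NN D j"
      show "i \<in> R j"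
      proof (cases "i \<in> NN D j")
        case True
        then have il: "i < lb" by (simp add: NN_def)
        have "P ! i \<le> sig D ! i" using il by (simp add: sig_nth)
        then show ?thesis using True by (auto simp: NN_def R_def)
      next
        case False then show ?thesis using i by (auto simp: A1_def A2_def)
      qed
    qed
  qed
  have d12: "A1 \<inter> A2 = {}" by (auto simp: A1_def A2_def)
  have d3: "(A1 \<union> A2) \<inter> NN D j = {}" by (auto simp: A1_def A2_def NN_def)
  have c1: "card A1 = (if j \<in> E then 1 else 0)"
  proof (cases "j \<in> E")
    case True
    then obtain i where i: "(i, j) \<in> S" "(i, Suc j) \<in> S" using E_iff by blast
    have "A1 = {i}"
    proof
      show "A1 \<subseteq> {i}"
      proof
        fix i' assume "i' \<in> A1"
        then have "(i', j) \<in> S" "(i', Suc j) \<in> S" by (auto simp: A1_def R_def Sset_def)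
        then have "rho j = i'" using rho_pair by blast
        moreover have "rho j = i" using rho_pair i by blast
        ultimately show "i' \<in> {i}" by simp
      qed
      show "{i} \<subseteq> A1" using i by (auto simp: A1_def S_iff[symmetric] Sset_def)
    qed
    then show ?thesis using True by simp
  next
    case False
    have "A1 = {}"
    proof (rule ccontr)
      assume "A1 \<noteq> {}"
      then obtain i where "i \<in> A1" by blast
      then have "(i, j) \<in> S" "(i, Suc j) \<in> S" by (auto simp: A1_def R_def Sset_def)
      then show False using False E_iff by blast
    qed
    then show ?thesis using False by simp
  qed
  have c2: "card A2 = (if j \<in> D \<and> j \<notin> E then 1 else 0)"
  proof (cases "j \<in> D \<and> j \<notin> E")
    case True
    have f3: "\<beta> ! rho j = j \<and> sig D ! rho j = j \<and> rho j \<in> R j" using F3[OF V Dsub] True by blast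
    have "A2 = {rho j}"
    proof
      show "A2 \<subseteq> {rho j}"
      proof
        fix i assume i: "i \<in> A2"
        then have il: "i < lb" "P ! i < j" by (auto simp: A2_def R_def)
        then show "i \<in> {rho j}" using F2[OF V Dsub il(1)] i by (auto simp: A2_def)
      qed
      show "{rho j} \<subseteq> A2" using f3 by (auto simp: A2_def)
    qed
    then show ?thesis using True by simp
  next
    case False
    have "A2 = {}"
    proof (rule ccontr)
      assume "A2 \<noteq> {}"
      then obtain i where i: "i \<in> A2" by blast
      then have il: "i < lb" "P ! i < j" by (auto simp: A2_def R_def)
      then have jD: "j \<in> D" "rho j = i" using F2[OF V Dsub il(1)] i by (auto simp: A2_def)
      then have "j \<in> E" using False by simp
      then obtain i' where i': "(i', j) \<in> S" "(i', Suc j) \<in> S" using E_iff by blast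
      then have "rho j = i'" using rho_pair by blast
      then show False using i' i jD by (auto simp: A2_def Sset_def)
    qed
    then show ?thesis using False by simp
  qed
  have ED: "j \<in> E \<Longrightarrow> j \<in> D" using V by (auto simp: valid_def)
  have "cc j = card A1 + card A2 + card (NN D j)"
    unfolding cc_def part using d12 d3 fR part
    by (metis card_Un_disjoint finite_Un)
  then show ?thesis using c1 c2 ED by (auto split: if_splits)
qed

definition cnt :: "nat set \<Rightarrow> nat \<Rightarrow> nat" where
  "cnt D j = cc j - (if j \<in> D then 1 else 0)"

definition st2 :: "nat set \<Rightarrow> nat list" where
  "st2 D = concat (map (\<lambda>j. replicate (cnt D j) j) (rev [a..<Suc b]))"

lemma stage2:
  assumes V: "valid D" and Dsub: "D \<subseteq> {a..<b}"
  shows "run (st2 D) (sig D) = Some \<beta>"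
proof -
  have "\<And>j0. a \<le> j0 \<Longrightarrow> j0 \<le> Suc b \<Longrightarrow>
     run (concat (map (\<lambda>j. replicate (cnt D j) j) (rev [a..<j0]))) (theta D (j0 - 1)) = Some \<beta>"
  proof -
    fix j0 assume "a \<le> j0" "j0 \<le> Suc b"
    then show "run (concat (map (\<lambda>j. replicate (cnt D j) j) (rev [a..<j0]))) (theta D (j0 - 1)) = Some \<beta>"
    proof (induction j0)
      case 0 then show ?case using a1 by simp
    next
      case (Suc j0)
      show ?case
      proof (cases "a = Suc j0")
        case True then show ?thesis using theta_bot[OF a1 V Dsub] by simp
      next
        case False
        then have aj: "a \<le> j0" "j0 \<le> b" using Suc.prems by auto
        have IH: "run (concat (map (\<lambda>j. replicate (cnt D j) j) (rev [a..<j0]))) (theta D (j0 - 1)) = Some \<beta>"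
          using Suc.IH aj by simp
        have c: "run (replicate (cnt D j0) j0) (theta D j0) = Some (theta D (j0 - 1))"
          using col[OF V Dsub aj, of "{}"] card_NN[OF V Dsub aj] fill_empty fill_full a1 aj
          by (simp add: cnt_def)
        have "rev [a..<Suc j0] = j0 # rev [a..<j0]" using aj by simp
        then show ?thesis using c IH by (simp add: run_append)
      qed
    qed
  qed
  from this[of "Suc b"] show ?thesis using ab theta_top[OF Dsub] by (simp add: st2_def)
qed

lemma positive:
  assumes V: "valid D" and Dsub: "D \<subseteq> {a..<b}"
  shows "run (sorted_list_of_set D @ st2 D) P = Some \<beta>"
  using stage1[OF V Dsub] stage2[OF V Dsub] by (simp add: run_append)

end


lemma sorted_crep: "sorted (concat (map (\<lambda>j. replicate (f j) j) [x..<y]))"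
proof (induction y)
  case 0 then show ?case by simp
next
  case (Suc y)
  show ?case
  proof (cases "x \<le> y")
    case True
    then have "[x..<Suc y] = [x..<y] @ [y]" by simp
    then show ?thesis using Suc by (auto simp: sorted_append)
  next
    case False then show ?thesis by simp
  qed
qed

lemma rev_crep: "rev (concat (map (\<lambda>j. replicate (f j) j) (rev xs))) = concat (map (\<lambda>j. replicate (f j) j) xs)"
  by (induction xs) auto

context strip begin

lemma st2_sorted: "sorted (rev (st2 D))"
  unfolding st2_def rev_crep by (rule sorted_crep)

lemma negative:
  assumes Dsub: "D \<subseteq> {a..<b}" and run: "run (sorted_list_of_set D @ st2 D) P = Some \<beta>"
  shows "valid D"
proof -
  have fD: "finite D" using Dsub finite_subset by blast
  obtain u where u: "run (sorted_list_of_set D) P = Some u" "run (st2 D) u = Some \<beta>"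
    using run by (cases "run (sorted_list_of_set D) P") (auto simp: run_append)
  have lu: "length u = lb" using run_mono[OF u(1)] lenP by simp
  have ED: "E \<subseteq> D"
  proof
    fix j assume jE: "j \<in> E"
    show "j \<in> D"
    proof (rule ccontr)
      assume nj: "j \<notin> D"
      obtain i where i: "(i, j) \<in> S" "(i, Suc j) \<in> S" using jE E_iff by blast
      then have il: "i < lb" "P ! i < j" "Suc j \<le> \<beta> ! i" by (auto simp: Sset_def)
      have "u ! i < j" using run_A[OF u(1), of i j] il lenP nj fD by simp
      moreover have "\<beta> ! i \<le> Suc (u ! i)" using run_B[OF u(2) _ st2_sorted] il lu by simp
      ultimately show False using il by simp
    qed
  qed
  have DE: "D \<subseteq> E \<union> NE"
  proof
    fix j assume jD: "j \<in> D"
    show "j \<in> E \<union> NE"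
    proof (rule ccontr)
      assume nj: "j \<notin> E \<union> NE"
      have jab: "a \<le> j" "j < b" using jD Dsub by auto
      have "R (Suc j) \<noteq> {}" using R_ne jab by simp
      then obtain i0 where "(i0, Suc j) \<in> S" using S_iff by blast
      have "j \<in> snd ` S" using supp jab by simp
      then have "\<exists>i1 i2. (i1, Suc j) \<in> S \<and> (i2, j) \<in> S \<and> \<not> i1 < i2"
        using nj \<open>(i0, Suc j) \<in> S\<close> by (auto simp: NE_set_def supp_def)
      then obtain i1 i2 where i12: "(i1, Suc j) \<in> S" "(i2, j) \<in> S" "\<not> i1 < i2" by blast
      have "i1 \<noteq> i2"
      proof
        assume "i1 = i2"
        then have "j \<in> E" using i12 E_iff by blast
        then show False using nj by simp
      qed
      then have i21: "i2 < i1" using i12 by simp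
      have i1: "i1 < lb" "P ! i1 < Suc j" "Suc j \<le> \<beta> ! i1" using i12 by (auto simp: Sset_def)
      have i2: "i2 < lb" "P ! i2 < j" "j \<le> \<beta> ! i2" using i12 by (auto simp: Sset_def)
      have Pi1: "P ! i1 = j"
      proof (rule ccontr)
        assume "P ! i1 \<noteq> j"
        then have "(i1, j) \<in> S" using i1 by (auto simp: Sset_def)
        then have "j \<in> E" using i12 E_iff by blast
        then show False using nj by simp
      qed
      obtain ds1 ds2 where ds: "sorted_list_of_set D = ds1 @ j # ds2"
        using split_list[of j "sorted_list_of_set D"] jD fD by auto
      have sw: "sorted_wrt (<) (ds1 @ j # ds2)" using ds[symmetric] by simp
      have d1: "\<forall>x\<in>set ds1. x < j" and d2: "\<forall>x\<in>set ds2. j < x"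
        using sw by (auto simp: sorted_wrt_append)
      obtain u1 where u1: "run ds1 P = Some u1" "run (j # ds2) u1 = Some u"
        using u(1) ds by (cases "run ds1 P") (auto simp: run_append)
      obtain u2 where u2: "step j u1 = Some u2" "run ds2 u2 = Some u"
        using u1(2) by (cases "step j u1") auto
      have lu1: "length u1 = lb" using run_mono[OF u1(1)] lenP by simp
      from step_SomeD[OF u2(1)] obtain r where r: "r < lb" "u1 ! r = j - 1" "u2 = u1[r := j]"
        "(j = 1 \<longrightarrow> (\<forall>i<lb. u1 ! i = 0 \<longrightarrow> i \<le> r))"
        "(j \<noteq> 1 \<longrightarrow> (\<forall>i<lb. u1 ! i = j - 1 \<longrightarrow> r \<le> i))" "1 \<le> j" using lu1 by auto
      have Pu1: "\<And>i. i < lb \<Longrightarrow> P ! i \<le> u1 ! i" using run_mono[OF u1(1)] lenP by simp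
      have rest: "run (ds2 @ st2 D) u2 = Some \<beta>" using u2(2) u(2) by (simp add: run_append)
      have lu2: "length u2 = lb" using r lu1 by simp
      have ri1: "r < i1"
      proof (cases "j = 1")
        case True
        have "P ! r = 0" using Pu1[OF r(1)] r True by simp
        then have "r < lb - length \<alpha>" using P_zero r by simp
        moreover have "\<not> i1 < lb - length \<alpha>" using P_zero[OF i1(1)] Pi1 True by simp
        ultimately show ?thesis by simp
      next
        case False
        have "u1 ! i2 < j" using run_A[OF u1(1), of i2 j] i2 lenP d1 by auto
        moreover have "\<not> u1 ! i2 < j - 1"
        proof
          assume lt: "u1 ! i2 < j - 1"
          have "r \<noteq> i2" using lt r by auto
          then have "u2 ! i2 = u1 ! i2" using r by simp
          moreover have "u ! i2 = u2 ! i2"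
            using run_U[OF u2(2), of i2] lu2 i2 d2 lt \<open>u2 ! i2 = u1 ! i2\<close> by fastforce
          moreover have "\<beta> ! i2 \<le> Suc (u ! i2)" using run_B[OF u(2) _ st2_sorted] i2 lu by simp
          ultimately show False using lt i2 by simp
        qed
        ultimately have "u1 ! i2 = j - 1" by simp
        then have "r \<le> i2" using r(5) False i2 by simp
        then show ?thesis using i21 by simp
      qed
      have ur: "u2 ! r = j" using r lu1 by simp
      have bR: "\<beta> ! r = j"
      proof -
        have rl2: "r < length u2" using r lu2 by simp
        have "u2 ! r \<le> \<beta> ! r" using run_mono[OF rest] rl2 by blast
        moreover have "\<not> Suc j \<le> \<beta> ! r"
        proof
          assume "Suc j \<le> \<beta> ! r"
          moreover have "P ! r < j" using Pu1[OF r(1)] r by simp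
          ultimately have "(r, j) \<in> S" "(r, Suc j) \<in> S" using r by (auto simp: Sset_def)
          then show False using nj E_iff by blast
        qed
        ultimately show ?thesis using ur by simp
      qed
      have "u1 ! i1 = j" using run_U[OF u1(1), of i1] i1 lenP d1 Pi1 by fastforce
      then have "u2 ! i1 = j" using r ri1 by simp
      then have "\<beta> ! i1 \<le> j" using run_C[OF rest ri1 _ ur bR] lu2 i1 r by simp
      then show False using i1 by simp
    qed
  qed
  show ?thesis using ED DE by (simp add: valid_def)
qed

theorem char:
  assumes "D \<subseteq> {a..<b}"
  shows "run (sorted_list_of_set D @ st2 D) P = Some \<beta> \<longleftrightarrow> valid D"
  using negative[OF assms] positive[OF _ assms] by blast

end


lemma count_list_distinct': "distinct xs \<Longrightarrow> count_list xs z = (if z \<in> set xs then 1 else 0)"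
  by (induction xs) auto

lemma count_replicate: "count_list (replicate n j) z = (if j = z then n else 0)"
  by (induction n) auto

lemma count_crep: "count_list (concat (map (\<lambda>j. replicate (f j) j) [x..<y])) z = (if x \<le> z \<and> z < y then f z else 0)"
proof (induction y)
  case 0 then show ?case by simp
next
  case (Suc y)
  show ?case
  proof (cases "x \<le> y")
    case True
    then have "[x..<Suc y] = [x..<y] @ [y]" by simp
    then show ?thesis using Suc True by (auto simp: count_replicate)
  next
    case False then show ?thesis by simp
  qed
qed

lemma count_run:
  "run cs s = Some t \<Longrightarrow> 1 \<le> j \<Longrightarrow>
   card {i. i < length s \<and> j \<le> t ! i} = card {i. i < length s \<and> j \<le> s ! i} + count_list cs j"
proof (induction cs arbitrary: s)
  case Nil then show ?case by simp
next
  case (Cons c cs)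
  then obtain u where u: "step c s = Some u" "run cs u = Some t"
    by (cases "step c s") auto
  from step_SomeD[OF u(1)] obtain r where r: "r < length s" "s!r = c - 1" "u = s[r := c]" "1 \<le> c"
    "length u = length s" by blast
  have IH: "card {i. i < length s \<and> j \<le> t ! i} = card {i. i < length s \<and> j \<le> u ! i} + count_list cs j"
    using Cons.IH[OF u(2) Cons.prems(2)] r by simp
  have "card {i. i < length s \<and> j \<le> u ! i} = card {i. i < length s \<and> j \<le> s ! i} + (if c = j then 1 else 0)"
  proof (cases "c = j")
    case True
    have "{i. i < length s \<and> j \<le> u ! i} = insert r {i. i < length s \<and> j \<le> s ! i}"
      using r True by (auto simp: nth_list_update)
    moreover have "r \<notin> {i. i < length s \<and> j \<le> s ! i}" using r True by auto
    ultimately show ?thesis using True by simp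
  next
    case False
    have "{i. i < length s \<and> j \<le> u ! i} = {i. i < length s \<and> j \<le> s ! i}"
      using r False by (auto simp: nth_list_update)
    then show ?thesis using False by simp
  qed
  then show ?case using IH by simp
qed

context strip begin

definition crep :: "nat set \<Rightarrow> nat list" where
  "crep D = concat (map (\<lambda>j. replicate (cnt D j) j) [a..<Suc b])"
definition wd :: "nat set \<Rightarrow> nat list" where
  "wd D = crep D @ rev (sorted_list_of_set D)"

lemma rev_wd: "rev (wd D) = sorted_list_of_set D @ st2 D"
  unfolding wd_def crep_def st2_def using rev_crep[of "cnt D" "rev [a..<Suc b]"] by simp

lemma cc0: "j < a \<or> b < j \<Longrightarrow> cc j = 0"
  using R_ne[of j] finR[of j] by (auto simp: cc_def)

lemma cc_pos: "a \<le> j \<Longrightarrow> j \<le> b \<Longrightarrow> 1 \<le> cc j"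
  using R_ne[of j] finR[of j] by (auto simp: cc_def card_gt_0_iff Suc_le_eq)

lemma count_word:
  assumes "run cs P = Some \<beta>" "1 \<le> j"
  shows "count_list cs j = cc j"
proof -
  have "card {i. i < lb \<and> j \<le> \<beta> ! i} = card {i. i < lb \<and> j \<le> P ! i} + count_list cs j"
    using count_run[OF assms] lenP by simp
  moreover have "{i. i < lb \<and> j \<le> \<beta> ! i} = {i. i < lb \<and> j \<le> P ! i} \<union> R j"
  proof -
    have "\<forall>x. x < lb \<and> j \<le> P ! x \<longrightarrow> j \<le> \<beta> ! x" using cont le_trans by blast
    then show ?thesis by (auto simp: R_def)
  qed
  moreover have "{i. i < lb \<and> j \<le> P ! i} \<inter> R j = {}" by (auto simp: R_def)
  ultimately show ?thesis by (simp add: cc_def card_Un_disjoint finR)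
qed

lemma count_crep_D: "count_list (crep D) z = (if a \<le> z \<and> z \<le> b then cnt D z else 0)"
  unfolding crep_def count_crep by auto

lemma set_crep: "set (crep D) \<subseteq> {a..b}"
proof
  fix z assume "z \<in> set (crep D)"
  then have "count_list (crep D) z \<noteq> 0" using count_list_0_iff by metis
  then show "z \<in> {a..b}" using count_crep_D[of D z] by (auto split: if_splits)
qed

lemma sorted_crep_D: "sorted (crep D)" unfolding crep_def by (rule sorted_crep)

lemma b_in_crep: "D \<subseteq> {a..<b} \<Longrightarrow> b \<in> set (crep D)"
proof -
  assume "D \<subseteq> {a..<b}"
  then have "b \<notin> D" by auto
  then have "count_list (crep D) b = cc b" using count_crep_D[of D b] ab by (simp add: cnt_def)
  then have "count_list (crep D) b \<noteq> 0" using cc_pos[of b] ab by simp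
  then show "b \<in> set (crep D)" using count_list_0_iff by metis
qed

definition nn :: nat where "nn = card S"

lemma card_S: "nn = (\<Sum>j\<in>{a..b}. cc j)"
proof -
  have "S = (\<lambda>(j, i). (i, j)) ` (SIGMA j:{a..b}. R j)"
  proof
    show "S \<subseteq> (\<lambda>(j, i). (i, j)) ` (SIGMA j:{a..b}. R j)"
    proof
      fix p assume p: "p \<in> S"
      obtain i j where ij: "p = (i, j)" by (cases p)
      have "j \<in> {a..b}" using supp p ij by force
      moreover have "i \<in> R j" using p ij S_iff by simp
      ultimately show "p \<in> (\<lambda>(j, i). (i, j)) ` (SIGMA j:{a..b}. R j)" using ij by force
    qed
    show "(\<lambda>(j, i). (i, j)) ` (SIGMA j:{a..b}. R j) \<subseteq> S" using S_iff by auto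
  qed
  moreover have "inj_on (\<lambda>(j, i). (i, j)) (SIGMA j:{a..b}. R j)" by (auto simp: inj_on_def)
  ultimately have "card S = card (SIGMA j:{a..b}. R j)" by (simp add: card_image)
  also have "\<dots> = (\<Sum>j\<in>{a..b}. card (R j))" by (rule card_SigmaI) (auto simp: finR)
  finally show ?thesis by (simp add: nn_def cc_def)
qed

lemma len_wd:
  assumes Dsub: "D \<subseteq> {a..<b}"
  shows "length (crep D) + card D = nn" "length (wd D) = nn"
proof -
  have fD: "finite D" using Dsub finite_subset by blast
  have "length (crep D) = sum (count_list (crep D)) {a..b}"
    using sum_count_set[of "crep D" "{a..b}"] set_crep by simp
  also have "\<dots> = (\<Sum>j\<in>{a..b}. cnt D j)" by (rule sum.cong) (auto simp: count_crep_D)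
  finally have l: "length (crep D) = (\<Sum>j\<in>{a..b}. cnt D j)" .
  have "(\<Sum>j\<in>{a..b}. cc j) = (\<Sum>j\<in>{a..b}. cnt D j + (if j \<in> D then 1 else 0))"
  proof (rule sum.cong)
    fix j assume "j \<in> {a..b}"
    then show "cc j = cnt D j + (if j \<in> D then 1 else 0)" using cc_pos[of j] by (auto simp: cnt_def)
  qed simp
  also have "\<dots> = (\<Sum>j\<in>{a..b}. cnt D j) + (\<Sum>j\<in>{a..b}. (if j \<in> D then 1 else 0))"
    by (simp add: sum.distrib)
  also have "(\<Sum>j\<in>{a..b}. (if j \<in> D then 1 else 0)) = card ({a..b} \<inter> D)"
    by (simp add: sum.If_cases)
  also have "{a..b} \<inter> D = D" using Dsub by auto
  finally show "length (crep D) + card D = nn" using l card_S by simp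
  then show "length (wd D) = nn" using fD by (simp add: wd_def)
qed

lemma hook_unique: "is_rev_hookword w k \<Longrightarrow> is_rev_hookword w k' \<Longrightarrow> k = k'"
proof (rule ccontr)
  assume h: "is_rev_hookword w k" "is_rev_hookword w k'" "k \<noteq> k'"
  show False
  proof (cases "k < k'")
    case True
    then have "w ! k > w ! (k + 1)" "w ! k \<le> w ! (k + 1)" using h by (auto simp: is_rev_hookword_def)
    then show False by simp
  next
    case False
    then have "k' < k" using h by simp
    then have "w ! k' > w ! (k' + 1)" "w ! k' \<le> w ! (k' + 1)" using h by (auto simp: is_rev_hookword_def)
    then show False by simp
  qed
qed

lemma asc_eq: "is_rev_hookword w k \<Longrightarrow> asc w = k"
  unfolding asc_def using hook_unique by blast

lemma wd_hook:
  assumes Dsub: "D \<subseteq> {a..<b}"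
  shows "is_rev_hookword (wd D) (length (crep D) - 1)"
proof -
  have fD: "finite D" using Dsub finite_subset by blast
  let ?c = "crep D" and ?d = "rev (sorted_list_of_set D)"
  have ne: "?c \<noteq> []" using b_in_crep[OF Dsub] by auto
  define k where "k = length ?c - 1"
  have kc: "k < length ?c" "Suc k = length ?c" using ne unfolding k_def by auto
  have sc: "sorted ?c" by (rule sorted_crep_D)
  have lastb: "?c ! k = b"
  proof -
    have "?c ! k \<in> set ?c" using kc by simp
    then have "?c ! k \<in> {a..b}" using set_crep[of D] by blast
    then have le: "?c ! k \<le> b" by simp
    obtain m where m: "m < length ?c" "?c ! m = b" using b_in_crep[OF Dsub] by (auto simp: in_set_conv_nth)
    have "?c ! m \<le> ?c ! k" using sorted_nth_mono[OF sc, of m k] m kc by simp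
    then show ?thesis using le m by simp
  qed
  have sd: "sorted_wrt (>) ?d" using sorted_wrt_rev[of "(>)" "sorted_list_of_set D"] by simp
  have dD: "set ?d = D" using fD by simp
  have wl: "length (wd D) = length ?c + length ?d" by (simp add: wd_def)
  have n1: "\<forall>j. j < k \<longrightarrow> wd D ! j \<le> wd D ! (j + 1)"
  proof (intro allI impI)
    fix j assume "j < k"
    then show "wd D ! j \<le> wd D ! (j + 1)" using sorted_nth_mono[OF sc, of j "j+1"] kc
      by (simp add: wd_def nth_append)
  qed
  have n2: "\<forall>j. k \<le> j \<and> j + 1 < length (wd D) \<longrightarrow> wd D ! j > wd D ! (j + 1)"
  proof (intro allI impI)
    fix j assume j: "k \<le> j \<and> j + 1 < length (wd D)"
    show "wd D ! j > wd D ! (j + 1)"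
    proof (cases "j = k")
      case True
      have "wd D ! j = b" using True lastb kc by (simp add: wd_def nth_append)
      moreover have "wd D ! (j + 1) = ?d ! 0" using True kc by (simp add: wd_def nth_append)
      moreover have "?d ! 0 \<in> D"
      proof -
        have "0 < length ?d" using j True kc wl by simp
        then have "?d ! 0 \<in> set ?d" by (rule nth_mem)
        then show ?thesis using dD by simp
      qed
      ultimately show ?thesis using Dsub by auto
    next
      case False
      then have "length ?c \<le> j" using j kc by simp
      then have "wd D ! j = ?d ! (j - length ?c)" "wd D ! (j + 1) = ?d ! (j + 1 - length ?c)"
        by (auto simp: wd_def nth_append)
      moreover have "?d ! (j - length ?c) > ?d ! (j + 1 - length ?c)"
      proof -
        define p where "p = j - length ?c"
        have e: "j + 1 - length ?c = Suc p" using \<open>length ?c \<le> j\<close> unfolding p_def by simp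
        have "Suc p < length ?d" using j wl \<open>length ?c \<le> j\<close> unfolding p_def by linarith
        then have "?d ! p > ?d ! Suc p" using sorted_wrt_nth_less[OF sd, of p "Suc p"] by simp
        then show ?thesis using e unfolding p_def by simp
      qed
      ultimately show ?thesis by simp
    qed
  qed
  have "k < length (wd D)" using kc wl by simp
  then show ?thesis using n1 n2 unfolding is_rev_hookword_def k_def by blast
qed

lemma asc_wd: assumes "D \<subseteq> {a..<b}" shows "asc (wd D) = nn - 1 - card D"
proof -
  have "asc (wd D) = length (crep D) - 1" using asc_eq[OF wd_hook[OF assms]] .
  then show ?thesis using len_wd(1)[OF assms] by simp
qed

lemma set_wd: assumes Dsub: "D \<subseteq> {a..<b}" shows "set (wd D) = {a..b}"
proof -
  have fD: "finite D" using Dsub finite_subset by blast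
  have "{a..b} \<subseteq> set (wd D)"
  proof
    fix z assume z: "z \<in> {a..b}"
    show "z \<in> set (wd D)"
    proof (cases "z \<in> D")
      case True then show ?thesis using fD by (simp add: wd_def)
    next
      case False
      then have "count_list (crep D) z = cc z" using count_crep_D[of D z] z by (simp add: cnt_def)
      then have "count_list (crep D) z \<noteq> 0" using cc_pos[of z] z by simp
      then have "z \<in> set (crep D)" using count_list_0_iff by metis
      then show ?thesis by (simp add: wd_def)
    qed
  qed
  moreover have "set (wd D) \<subseteq> {a..b}" using set_crep Dsub fD by (auto simp: wd_def)
  ultimately show ?thesis by blast
qed

lemma wd_CRHW: assumes Dsub: "D \<subseteq> {a..<b}" shows "wd D \<in> CRHW nn"
proof -
  have "\<forall>i\<in>set (wd D). 1 \<le> i" using set_wd[OF Dsub] a1 by auto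
  moreover have "\<exists>a' b'. set (wd D) = {a'..b'}" using set_wd[OF Dsub] by blast
  moreover have "\<exists>k. is_rev_hookword (wd D) k" using wd_hook[OF Dsub] by blast
  ultimately show ?thesis using len_wd(2)[OF Dsub] unfolding CRHW_def by blast
qed

lemma Pdef: "P = pad (lb - length \<alpha>) \<alpha>" by (simp add: PP_def)

lemma wd_act:
  assumes Dsub: "D \<subseteq> {a..<b}"
  shows "word_act (wd D) \<alpha> = Some \<beta> \<longleftrightarrow> valid D"
proof -
  have "\<forall>c\<in>set (wd D). c \<ge> 1" using set_wd[OF Dsub] a1 by auto
  then have "word_act (wd D) \<alpha> = Some \<beta> \<longleftrightarrow> run (rev (wd D)) P = Some \<beta>"
    using word_act_iff_run[OF compa compb lenab] Pdef by simp
  then show ?thesis using char[OF Dsub] rev_wd by simp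
qed

lemma wd_inv: assumes Dsub: "D \<subseteq> {a..<b}" shows "set (drop (Suc (asc (wd D))) (wd D)) = D"
proof -
  have fD: "finite D" using Dsub finite_subset by blast
  have "asc (wd D) = length (crep D) - 1" using asc_eq[OF wd_hook[OF Dsub]] .
  moreover have "crep D \<noteq> []" using b_in_crep[OF Dsub] by auto
  ultimately have "Suc (asc (wd D)) = length (crep D)" by simp
  then show ?thesis using fD by (simp add: wd_def)
qed

lemma wd_inj: "inj_on wd (Pow {a..<b})"
  by (rule inj_on_inverseI[of _ "\<lambda>w. set (drop (Suc (asc w)) w)"]) (simp add: wd_inv)

lemma word_is_wd:
  assumes w: "w \<in> CRHW nn" and act: "word_act w \<alpha> = Some \<beta>"
  shows "\<exists>D. D \<subseteq> {a..<b} \<and> w = wd D"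
proof -
  obtain k where hk: "is_rev_hookword w k" using w by (auto simp: CRHW_def)
  have l1: "\<forall>c\<in>set w. c \<ge> 1" using w by (auto simp: CRHW_def)
  have rr: "run (rev w) P = Some \<beta>"
    using act word_act_iff_run[OF compa compb lenab l1] Pdef by simp
  have cnt_w: "\<And>j. count_list w j = cc j"
  proof -
    fix j
    show "count_list w j = cc j"
    proof (cases "j = 0")
      case True
      have "0 \<notin> set w" using l1 by auto
      moreover have "cc 0 = 0" by (simp add: cc_def R_def)
      ultimately show ?thesis using True by simp
    next
      case False
      then show ?thesis using count_word[OF rr] by simp
    qed
  qed
  have setw: "set w \<subseteq> {a..b}"
  proof
    fix z assume "z \<in> set w"
    then have "count_list w z \<noteq> 0" using count_list_0_iff by metis
    then have "cc z \<noteq> 0" using cnt_w by simp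
    then show "z \<in> {a..b}" using cc0[of z] by force
  qed
  define inc where "inc = take (Suc k) w"
  define dec where "dec = drop (Suc k) w"
  have kl: "k < length w" using hk by (simp add: is_rev_hookword_def)
  have wsplit: "w = inc @ dec" by (simp add: inc_def dec_def)
  have linc: "length inc = Suc k" using kl by (simp add: inc_def)
  have sinc: "sorted inc"
    unfolding sorted_iff_nth_Suc
  proof (intro allI impI)
    fix i assume "Suc i < length inc"
    then show "inc ! i \<le> inc ! Suc i" using hk linc by (simp add: inc_def is_rev_hookword_def)
  qed
  have sdec: "sorted_wrt (>) dec"
    unfolding sorted_wrt_iff_nth_Suc_transp[of "(>)", OF transp_on_greater]
  proof (intro allI impI)
    fix i assume i: "Suc i < length dec"
    have "w ! (Suc k + i) > w ! (Suc k + i + 1)"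
      using hk i kl unfolding is_rev_hookword_def dec_def by auto
    then show "dec ! i > dec ! Suc i" using i by (simp add: dec_def)
  qed
  have topk: "\<forall>x\<in>set dec. x < w ! k"
  proof
    fix x assume "x \<in> set dec"
    then obtain i where i: "i < length dec" "dec ! i = x" by (auto simp: in_set_conv_nth)
    have "w ! k > w ! (k + 1)" using hk i kl unfolding is_rev_hookword_def dec_def by auto
    moreover have "dec ! 0 \<ge> dec ! i"
    proof (cases i)
      case 0 then show ?thesis by simp
    next
      case (Suc i') then show ?thesis using sorted_wrt_nth_less[OF sdec, of 0 i] i by simp
    qed
    moreover have "dec ! 0 = w ! (k + 1)" using i by (simp add: dec_def)
    ultimately show "x < w ! k" using i by simp
  qed
  have wkb: "w ! k \<le> b" using setw kl by (meson atLeastAtMost_iff nth_mem subsetD)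
  define D where "D = set dec"
  have Dsub: "D \<subseteq> {a..<b}"
  proof
    fix x assume "x \<in> D"
    then have "x \<in> set w" "x < w ! k" using topk wsplit D_def by auto
    then show "x \<in> {a..<b}" using setw wkb by auto
  qed
  have fD: "finite D" by (simp add: D_def)
  have dd: "distinct dec" using sdec by (metis sorted_wrt_rev strict_sorted_iff distinct_rev)
  have decD: "dec = rev (sorted_list_of_set D)"
  proof -
    have "sorted_wrt (<) (rev dec)" using sdec by (simp add: sorted_wrt_rev)
    then have sr: "sorted (rev dec)" by (simp add: strict_sorted_iff)
    have "sort dec = rev dec" using properties_for_sort[of "rev dec" dec] sr by simp
    then have "sorted_list_of_set (set (rev dec)) = rev dec"
      using dd by (simp add: sorted_list_of_set_sort_remdups distinct_remdups_id)
    then show ?thesis by (simp add: D_def)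
  qed
  have cdec: "\<And>z. count_list dec z = (if z \<in> D then 1 else 0)"
    using dd unfolding D_def by (simp add: count_list_distinct')
  have "mset inc = mset (crep D)"
  proof (rule multiset_eqI)
    fix z
    have "count_list w z = count_list inc z + count_list dec z" using wsplit by (metis count_list_append)
    then have "count_list inc z = cc z - (if z \<in> D then 1 else 0)" using cnt_w cdec by simp
    moreover have "count_list (crep D) z = (if a \<le> z \<and> z \<le> b then cnt D z else 0)" by (rule count_crep_D)
    ultimately show "count (mset inc) z = count (mset (crep D)) z"
      using cc0[of z] by (auto simp: count_mset cnt_def)
  qed
  then have "inc = crep D"
    using properties_for_sort[of inc "crep D"] properties_for_sort[of "crep D" inc] sinc sorted_crep_D
    by (metis sorted_sort_id)
  then have "w = wd D" using wsplit decD by (simp add: wd_def)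
  then show ?thesis using Dsub by blast
qed

end


lemma alt_pow: "finite A \<Longrightarrow> (\<Sum>X\<in>Pow A. (-1::int) ^ card X) = (if A = {} then 1 else 0)"
proof (induction rule: finite_induct)
  case empty then show ?case by simp
next
  case (insert x F)
  have disj: "Pow F \<inter> insert x ` Pow F = {}" using insert.hyps by auto
  have inj: "inj_on (insert x) (Pow F)" using insert.hyps by (auto simp: inj_on_def)
  have fP: "finite (Pow F)" using insert.hyps by simp
  have "(\<Sum>X\<in>Pow (insert x F). (-1::int) ^ card X)
      = (\<Sum>X\<in>Pow F. (-1::int) ^ card X) + (\<Sum>X\<in>insert x ` Pow F. (-1::int) ^ card X)"
    unfolding Pow_insert using disj fP by (simp add: sum.union_disjoint)
  also have "(\<Sum>X\<in>insert x ` Pow F. (-1::int) ^ card X) = (\<Sum>X\<in>Pow F. (-1::int) ^ card (insert x X))"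
    using inj by (simp add: sum.reindex)
  also have "\<dots> = (\<Sum>X\<in>Pow F. - ((-1::int) ^ card X))"
  proof (rule sum.cong)
    fix X assume "X \<in> Pow F"
    then have "x \<notin> X" "finite X" using insert.hyps finite_subset by auto
    then show "(-1::int) ^ card (insert x X) = - ((-1::int) ^ card X)" by simp
  qed simp
  finally show ?case by (simp add: sum_negf)
qed

context strip begin

lemma nn_ge: "b - a + 1 \<le> nn"
proof -
  have "(\<Sum>j\<in>{a..b}. (1::nat)) \<le> (\<Sum>j\<in>{a..b}. cc j)"
  proof (rule sum_mono)
    fix j assume "j \<in> {a..b}"
    then show "1 \<le> cc j" using cc_pos by simp
  qed
  then show ?thesis using card_S ab by simp
qed

theorem sum_main:
  "(\<Sum>w\<in>{w \<in> CRHW nn. word_act w \<alpha> = Some \<beta>}. (-1::int) ^ asc w)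
     = (-1::int) ^ (nn - 1 - card E) * (if card NE = 0 then 1 else 0)"
proof -
  define V where "V = {D. D \<subseteq> {a..<b} \<and> valid D}"
  have W: "{w \<in> CRHW nn. word_act w \<alpha> = Some \<beta>} = wd ` V"
  proof
    show "{w \<in> CRHW nn. word_act w \<alpha> = Some \<beta>} \<subseteq> wd ` V"
    proof
      fix w assume "w \<in> {w \<in> CRHW nn. word_act w \<alpha> = Some \<beta>}"
      then have w: "w \<in> CRHW nn" "word_act w \<alpha> = Some \<beta>" by auto
      obtain D where D: "D \<subseteq> {a..<b}" "w = wd D" using word_is_wd[OF w] by blast
      then have "valid D" using wd_act w by simp
      then show "w \<in> wd ` V" using D V_def by blast
    qed
    show "wd ` V \<subseteq> {w \<in> CRHW nn. word_act w \<alpha> = Some \<beta>}"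
      using wd_CRHW wd_act V_def by auto
  qed
  have injV: "inj_on wd V" using wd_inj by (rule inj_on_subset) (auto simp: V_def)
  have s1: "(\<Sum>w\<in>wd ` V. (-1::int) ^ asc w) = (\<Sum>D\<in>V. (-1::int) ^ (nn - 1 - card D))"
    using injV by (simp add: sum.reindex asc_wd V_def)
  have fE: "finite E" using E_sub finite_subset by blast
  have fNE: "finite NE" using NE_sub finite_subset by blast
  have V2: "V = (\<lambda>X. E \<union> X) ` Pow NE"
  proof
    show "V \<subseteq> (\<lambda>X. E \<union> X) ` Pow NE"
    proof
      fix D assume "D \<in> V"
      then have "E \<subseteq> D" "D \<subseteq> E \<union> NE" by (auto simp: V_def valid_def)
      then have "D = E \<union> (D - E)" "D - E \<in> Pow NE" by auto
      then show "D \<in> (\<lambda>X. E \<union> X) ` Pow NE" by blast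
    qed
    show "(\<lambda>X. E \<union> X) ` Pow NE \<subseteq> V"
      using E_sub NE_sub by (auto simp: V_def valid_def)
  qed
  have injE: "inj_on (\<lambda>X. E \<union> X) (Pow NE)"
  proof (rule inj_on_inverseI[of _ "\<lambda>D. D - E"])
    fix X assume "X \<in> Pow NE"
    then show "E \<union> X - E = X" using E_NE by auto
  qed
  define N where "N = nn - 1 - card E"
  have bound: "card E + card NE \<le> nn - 1"
  proof -
    have "card E + card NE = card (E \<union> NE)" using fE fNE E_NE by (simp add: card_Un_disjoint)
    also have "\<dots> \<le> card {a..<b}" using E_sub NE_sub by (intro card_mono) auto
    finally show ?thesis using nn_ge by simp
  qed
  have s2a: "(\<Sum>D\<in>V. (-1::int) ^ (nn - 1 - card D)) = (\<Sum>X\<in>Pow NE. (-1::int) ^ (nn - 1 - card (E \<union> X)))"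
    by (simp only: V2 sum.reindex[OF injE] comp_def)
  have s2b: "\<And>X. X \<in> Pow NE \<Longrightarrow> (-1::int) ^ (nn - 1 - card (E \<union> X)) = (-1) ^ N * (-1) ^ card X"
  proof -
    fix X assume "X \<in> Pow NE"
    then have X: "X \<subseteq> NE" by simp
    then have fX: "finite X" using fNE finite_subset by blast
    have "card (E \<union> X) = card E + card X" using fE fX X E_NE by (subst card_Un_disjoint) auto
    moreover have "card X \<le> card NE" using X fNE by (simp add: card_mono)
    ultimately have eq: "nn - 1 - card (E \<union> X) + card X = N" using bound unfolding N_def by linarith
    have "(-1::int) ^ N * (-1) ^ card X = (-1) ^ (nn - 1 - card (E \<union> X)) * ((-1) ^ card X * (-1) ^ card X)"
      using eq[symmetric] by (simp add: power_add)
    also have "\<dots> = (-1) ^ (nn - 1 - card (E \<union> X))" by (simp add: power_add[symmetric])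
    finally show "(-1::int) ^ (nn - 1 - card (E \<union> X)) = (-1) ^ N * (-1) ^ card X" by simp
  qed
  have s2: "(\<Sum>D\<in>V. (-1::int) ^ (nn - 1 - card D)) = (\<Sum>X\<in>Pow NE. (-1::int) ^ N * (-1) ^ card X)"
    using s2a s2b by simp
  have s3: "(\<Sum>X\<in>Pow NE. (-1::int) ^ N * (-1) ^ card X) = (-1) ^ N * (if NE = {} then 1 else 0)"
    using alt_pow[OF fNE] by (simp add: sum_distrib_left[symmetric])
  have "card NE = 0 \<longleftrightarrow> NE = {}" using fNE by simp
  then show ?thesis using W s1 s2 s3 unfolding N_def by simp
qed

end


definition shf :: "nat \<times> nat \<Rightarrow> nat \<times> nat" where "shf p = (Suc (fst p), snd p)"

lemma mem_shf: "(x, j) \<in> shf ` T \<longleftrightarrow> x \<noteq> 0 \<and> (x - 1, j) \<in> T"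
proof
  assume "(x, j) \<in> shf ` T"
  then obtain p where "p \<in> T" "(x, j) = shf p" by blast
  then show "x \<noteq> 0 \<and> (x - 1, j) \<in> T" by (cases p) (auto simp: shf_def)
next
  assume h: "x \<noteq> 0 \<and> (x - 1, j) \<in> T"
  then have "(x, j) = shf (x - 1, j)" by (simp add: shf_def)
  then show "(x, j) \<in> shf ` T" using h by blast
qed

lemma mem_shf_Suc: "(Suc i, j) \<in> shf ` T \<longleftrightarrow> (i, j) \<in> T"
  using mem_shf by simp

lemma inj_shf: "inj shf" by (auto simp: inj_def shf_def)

lemma E_shf: "E_set (shf ` T) = E_set T"
proof
  show "E_set (shf ` T) \<subseteq> E_set T"
  proof
    fix j assume "j \<in> E_set (shf ` T)"
    then obtain x where "(x, j) \<in> shf ` T" "(x, j + 1) \<in> shf ` T" by (auto simp: E_set_def)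
    then show "j \<in> E_set T" unfolding mem_shf E_set_def by blast
  qed
  show "E_set T \<subseteq> E_set (shf ` T)"
  proof
    fix j assume "j \<in> E_set T"
    then obtain i where "(i, j) \<in> T" "(i, j + 1) \<in> T" by (auto simp: E_set_def)
    then have "(Suc i, j) \<in> shf ` T" "(Suc i, j + 1) \<in> shf ` T" using mem_shf_Suc by blast+
    then show "j \<in> E_set (shf ` T)" unfolding E_set_def by blast
  qed
qed

lemma supp_shf: "supp (shf ` T) = supp T"
  by (auto simp: supp_def shf_def image_image)

lemma NE_shf: "NE_set (shf ` T) = NE_set T"
proof -
  have A: "(\<exists>i. (i, j + 1) \<in> shf ` T) \<longleftrightarrow> (\<exists>i. (i, j + 1) \<in> T)" for j
  proof
    assume "\<exists>i. (i, j + 1) \<in> shf ` T"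
    then show "\<exists>i. (i, j + 1) \<in> T" unfolding mem_shf by blast
  next
    assume "\<exists>i. (i, j + 1) \<in> T"
    then show "\<exists>i. (i, j + 1) \<in> shf ` T" using mem_shf_Suc by blast
  qed
  have B: "(\<forall>i1 i2. (i1, j + 1) \<in> shf ` T \<and> (i2, j) \<in> shf ` T \<longrightarrow> i1 < i2) \<longleftrightarrow>
           (\<forall>i1 i2. (i1, j + 1) \<in> T \<and> (i2, j) \<in> T \<longrightarrow> i1 < i2)" for j
  proof
    assume h: "\<forall>i1 i2. (i1, j + 1) \<in> shf ` T \<and> (i2, j) \<in> shf ` T \<longrightarrow> i1 < i2"
    show "\<forall>i1 i2. (i1, j + 1) \<in> T \<and> (i2, j) \<in> T \<longrightarrow> i1 < i2"
    proof (intro allI impI)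
      fix i1 i2 assume "(i1, j + 1) \<in> T \<and> (i2, j) \<in> T"
      then have "(Suc i1, j + 1) \<in> shf ` T \<and> (Suc i2, j) \<in> shf ` T" using mem_shf_Suc by blast
      then show "i1 < i2" using h by blast
    qed
  next
    assume h: "\<forall>i1 i2. (i1, j + 1) \<in> T \<and> (i2, j) \<in> T \<longrightarrow> i1 < i2"
    show "\<forall>i1 i2. (i1, j + 1) \<in> shf ` T \<and> (i2, j) \<in> shf ` T \<longrightarrow> i1 < i2"
    proof (intro allI impI)
      fix i1 i2 assume "(i1, j + 1) \<in> shf ` T \<and> (i2, j) \<in> shf ` T"
      then have "i1 \<noteq> 0" "i2 \<noteq> 0" "(i1 - 1, j + 1) \<in> T" "(i2 - 1, j) \<in> T" unfolding mem_shf by auto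
      then show "i1 < i2" using h by fastforce
    qed
  qed
  show ?thesis unfolding NE_set_def supp_shf using A B by simp
qed

lemma skew_eq:
  assumes l: "length \<alpha> \<le> length \<beta>"
  shows "skew \<beta> \<alpha> = shf ` Sset \<alpha> \<beta>"
proof -
  define m where "m = length \<beta> - length \<alpha>"
  have Pn: "\<And>i. i < length \<beta> \<Longrightarrow> PP \<alpha> \<beta> ! i = (if i < m then 0 else \<alpha> ! (i - m))"
    by (simp add: PP_def pad_def nth_append m_def)
  have "\<And>r j. (r, j) \<in> skew \<beta> \<alpha> \<longleftrightarrow> (r, j) \<in> shf ` Sset \<alpha> \<beta>"
  proof -
    fix r j
    show "(r, j) \<in> skew \<beta> \<alpha> \<longleftrightarrow> (r, j) \<in> shf ` Sset \<alpha> \<beta>"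
    proof
      assume h: "(r, j) \<in> skew \<beta> \<alpha>"
      then have d: "1 \<le> r" "r \<le> length \<beta>" "1 \<le> j" "j \<le> \<beta> ! (r - 1)" by (auto simp: skew_def diagram_def)
      have nr: "\<not> (\<exists>i j'. (r, j) = (length \<beta> - length \<alpha> + i, j') \<and> 1 \<le> i \<and> i \<le> length \<alpha> \<and> 1 \<le> j' \<and> j' \<le> \<alpha> ! (i - 1))"
        using h unfolding skew_def by blast
      have "PP \<alpha> \<beta> ! (r - 1) < j"
      proof (cases "r - 1 < m")
        case True then show ?thesis using Pn d by simp
      next
        case False
        have "\<not> j \<le> \<alpha> ! (r - m - 1)"
        proof
          assume jj: "j \<le> \<alpha> ! (r - m - 1)"
          have "(r, j) = (length \<beta> - length \<alpha> + (r - m), j) \<and> 1 \<le> r - m \<and> r - m \<le> length \<alpha> \<and> 1 \<le> j \<and> j \<le> \<alpha> ! (r - m - 1)"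
            using False d jj l unfolding m_def by auto
          then show False using nr by blast
        qed
        moreover have "r - 1 - m = r - m - 1" by simp
        ultimately show ?thesis using Pn[of "r - 1"] d False by simp
      qed
      then have "(r - 1, j) \<in> Sset \<alpha> \<beta>" using d by (auto simp: Sset_def)
      then show "(r, j) \<in> shf ` Sset \<alpha> \<beta>" using mem_shf d by simp
    next
      assume h: "(r, j) \<in> shf ` Sset \<alpha> \<beta>"
      then have r0: "r \<noteq> 0" and s: "(r - 1, j) \<in> Sset \<alpha> \<beta>" using mem_shf by auto
      then have s': "r - 1 < length \<beta>" "PP \<alpha> \<beta> ! (r - 1) < j" "j \<le> \<beta> ! (r - 1)" by (auto simp: Sset_def)
      have dg: "(r, j) \<in> diagram \<beta>" using r0 s' by (auto simp: diagram_def)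
      have "\<not> (\<exists>i j'. (r, j) = (length \<beta> - length \<alpha> + i, j') \<and> 1 \<le> i \<and> i \<le> length \<alpha> \<and> 1 \<le> j' \<and> j' \<le> \<alpha> ! (i - 1))"
      proof
        assume "\<exists>i j'. (r, j) = (length \<beta> - length \<alpha> + i, j') \<and> 1 \<le> i \<and> i \<le> length \<alpha> \<and> 1 \<le> j' \<and> j' \<le> \<alpha> ! (i - 1)"
        then obtain i where i: "r = m + i" "1 \<le> i" "i \<le> length \<alpha>" "j \<le> \<alpha> ! (i - 1)" unfolding m_def by auto
        have "\<not> r - 1 < m" using i by simp
        then have "PP \<alpha> \<beta> ! (r - 1) = \<alpha> ! (i - 1)" using Pn[OF s'(1)] i by simp
        then show False using s' i by simp
      qed
      then show "(r, j) \<in> skew \<beta> \<alpha>" using dg unfolding skew_def by blast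
    qed
  qed
  then show ?thesis by auto
qed

lemma finite_Sset: "finite (Sset \<alpha> \<beta>)"
proof -
  have "Sset \<alpha> \<beta> \<subseteq> {..<length \<beta>} \<times> {..Max (insert 0 (set \<beta>))}"
  proof
    fix p assume "p \<in> Sset \<alpha> \<beta>"
    then obtain i j where p: "p = (i, j)" "i < length \<beta>" "j \<le> \<beta> ! i" by (auto simp: Sset_def)
    have "\<beta> ! i \<in> set \<beta>" using p(2) by simp
    then have "\<beta> ! i \<le> Max (insert 0 (set \<beta>))" by (simp add: Max_ge_iff)
    then have "j \<le> Max (insert 0 (set \<beta>))" using p(3) by linarith
    then show "p \<in> {..<length \<beta>} \<times> {..Max (insert 0 (set \<beta>))}" using p by auto
  qed
  then show ?thesis by (rule finite_subset) auto
qed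

theorem mainTheorem18:
  fixes \<alpha> \<beta> :: "nat list" and n :: nat
  assumes "is_composition \<alpha>"
    and "comp_less \<alpha> \<beta>"
    and "nc_border_strip (skew \<beta> \<alpha>)"
    and "card (skew \<beta> \<alpha>) = n"
  shows "(\<Sum>w\<in>{w \<in> CRHW n. word_act w \<alpha> = Some \<beta>}. (-1::int) ^ asc w)
         = (-1::int) ^ (n - 1 - card (E_set (skew \<beta> \<alpha>)))
           * (if card (NE_set (skew \<beta> \<alpha>)) = 0 then 1 else 0)"
proof -
  have IS: "Inv \<alpha> \<beta>" "sum_list \<alpha> < sum_list \<beta>" using comp_less_Inv[OF assms(1,2)] by auto
  have lab: "length \<alpha> \<le> length \<beta>" using IS by (simp add: Inv_def)
  let ?S = "Sset \<alpha> \<beta>"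
  have sk: "skew \<beta> \<alpha> = shf ` ?S" using skew_eq[OF lab] .
  have fS: "finite ?S" by (rule finite_Sset)
  have cardS: "card ?S = n" using assms(4) sk card_image[OF inj_on_subset[OF inj_shf]] by (metis subset_UNIV)
  have ncs: "nc_border_strip (shf ` ?S)" using assms(3) sk by simp
  obtain a0 b0 where ab0: "supp (shf ` ?S) = {a0..b0}" using ncs by (auto simp: nc_border_strip_def interval_shape_def)
  have sup: "snd ` ?S = {a0..b0}" using ab0 supp_shf by (simp add: supp_def)
  have Sne: "?S \<noteq> {}"
  proof
    assume e: "?S = {}"
    have cont: "\<forall>i<length \<beta>. PP \<alpha> \<beta> ! i \<le> \<beta> ! i" using IS by (simp add: Inv_def)
    have "PP \<alpha> \<beta> = \<beta>"
    proof (rule nth_equalityI)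
      show "length (PP \<alpha> \<beta>) = length \<beta>" using lab by (simp add: PP_def pad_def)
      fix i assume "i < length (PP \<alpha> \<beta>)"
      then have i: "i < length \<beta>" using lab by (simp add: PP_def pad_def)
      have "\<not> PP \<alpha> \<beta> ! i < \<beta> ! i"
      proof
        assume "PP \<alpha> \<beta> ! i < \<beta> ! i"
        then have "(i, \<beta> ! i) \<in> ?S" using i by (simp add: Sset_def)
        then show False using e by simp
      qed
      moreover have "PP \<alpha> \<beta> ! i \<le> \<beta> ! i" using cont i by blast
      ultimately show "PP \<alpha> \<beta> ! i = \<beta> ! i" by linarith
    qed
    then have "sum_list \<beta> = sum_list \<alpha>" by (metis PP_def pad_def sum_list_append sum_list_replicate mult_zero_right add_0)
    then show False using IS by simp
  qed
  have ab: "a0 \<le> b0" using sup Sne by (metis atLeastatMost_empty_iff2 image_is_empty)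
  have fM: "\<And>j. finite {i'. (i', j) \<in> shf ` ?S}"
  proof -
    fix j
    have "{i'. (i', j) \<in> shf ` ?S} \<subseteq> fst ` (shf ` ?S)"
    proof
      fix x assume "x \<in> {i'. (i', j) \<in> shf ` ?S}"
      then have "(x, j) \<in> shf ` ?S" by simp
      then show "x \<in> fst ` (shf ` ?S)" by (metis fst_conv image_eqI)
    qed
    then show "finite {i'. (i', j) \<in> shf ` ?S}" using fS by (meson finite_imageI finite_subset)
  qed
  have nc1: "\<And>i i'. (i, 1) \<in> ?S \<Longrightarrow> (i, 2) \<in> ?S \<Longrightarrow> (i', 1) \<in> ?S \<Longrightarrow> i' \<le> i"
  proof -
    fix i i' assume h: "(i, 1) \<in> ?S" "(i, 2) \<in> ?S" "(i', 1) \<in> ?S"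
    have "(Suc i, 1) \<in> shf ` ?S" "(Suc i, 2) \<in> shf ` ?S" "(Suc i', 1) \<in> shf ` ?S"
      using h mem_shf_Suc by blast+
    then have "Suc i = Max {i'. (i', 1) \<in> shf ` ?S}" "Suc i' \<in> {i'. (i', 1) \<in> shf ` ?S}"
      using ncs unfolding nc_border_strip_def by auto
    then have "Suc i' \<le> Suc i" using fM by simp
    then show "i' \<le> i" by simp
  qed
  have nc2: "\<And>i j i'. 2 \<le> j \<Longrightarrow> (i, j) \<in> ?S \<Longrightarrow> (i, Suc j) \<in> ?S \<Longrightarrow> (i', j) \<in> ?S \<Longrightarrow> i \<le> i'"
  proof -
    fix i j i' assume h: "2 \<le> j" "(i, j) \<in> ?S" "(i, Suc j) \<in> ?S" "(i', j) \<in> ?S"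
    have "(Suc i, j) \<in> shf ` ?S" "(Suc i, j + 1) \<in> shf ` ?S" "(Suc i', j) \<in> shf ` ?S"
      using h mem_shf_Suc by auto
    then have "Suc i = Min {i'. (i', j) \<in> shf ` ?S}" "Suc i' \<in> {i'. (i', j) \<in> shf ` ?S}"
      using ncs h(1) unfolding nc_border_strip_def by auto
    then have "Suc i \<le> Suc i'" using fM by simp
    then show "i \<le> i'" by simp
  qed
  interpret st: strip \<alpha> \<beta> a0 b0
    using assms(1) IS(1) nc1 nc2 sup ab by unfold_locales auto
  have nn: "st.nn = n" using cardS by (simp add: st.nn_def)
  have "E_set (skew \<beta> \<alpha>) = E_set ?S" using sk E_shf by simp
  moreover have "NE_set (skew \<beta> \<alpha>) = NE_set ?S" using sk NE_shf by simp
  ultimately show ?thesis using st.sum_main nn by simp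
qed


end
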